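(* Let $H$ be a Hamiltonian on $\mathbb{H}_\mathcal{S}$, $|\Psi\rangle\in\mathbb{H}_\mathcal{S}$ a unit vector, $\beta\ge0$, $\varepsilon\ge0$, and $S_r=\{\Delta\beta_l>0\}_{l\in[r]}$ with $\sum_{l=1}^r\Delta\beta_l=\beta$. Set $\beta_0:=0$, $\beta_l:=\sum_{k=1}^l\Delta\beta_k$, and $p_\Psi(b):=\|F_b(H)|\Psi\rangle\|^2$. For each $l\in[r]$ let $P_l$ be a $(\Delta\beta_l,\varepsilon'_l,\alpha_l)$-QITE-primitive for $H$ with $\alpha_l>0$ and $$\varepsilon'_l\le\begin{cases}\dfrac{\varepsilon\prod_{k=1}^r\alpha_k}{2\cdot4^{r-1}}\sqrt{p_\Psi(\beta)}, & l=1,\\[2mm] \dfrac{\varepsilon\prod_{k=l}^r\alpha_k}{4^{r-l+1}}\sqrt{\dfrac{p_\Psi(\beta)}{p_\Psi(\beta_{l-1})}}, & l>1.\end{cases}$$ Then the fragmented QITE algorithm is a $(\beta,\mathcal{O}(\varepsilon))$-master-QITE-algorithm for $H$ on $|\Psi\rangle$, with average query complexity $$Q_{S_r}(\beta,\varepsilon)=\sum_{l=1}^r n_l\,q(\Delta\beta_l,\varepsilon'_l,\alpha_l),\qquad n_l:=\frac{p_\Psi(\beta_{l-1})}{p_\Psi(\beta)\prod_{k=l}^r\alpha_k^2},$$ where $n_l$ is the average number of times $P_l$ is run and $q(\Delta\beta_l,\varepsilon'_l,\alpha_l)$ is the query complexity of $P_l$.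
   Context: $F_b(H):=e^{-b(H-\lambda_{\min}\mathbb{1})}$ with $\lambda_{\min}$ the smallest eigenvalue of $H$ ($\|H\|\le1$). A unitary $U$ on $\mathbb{H}_\mathcal{S}\otimes\mathbb{H}_\mathcal{A}$ is an $(\varepsilon,\alpha)$-block-encoding of $A$ if $\|\alpha A-\langle0|U|0\rangle\|\le\varepsilon$; a $(b,\varepsilon',\alpha)$-QITE-primitive of query complexity $q$ is a circuit making $q$ oracle calls that generates an $(\varepsilon',\alpha)$-block-encoding of $F_b(H)$; applying it to $|\phi\rangle|0\rangle$ and measuring the ancillas in the computational basis, outcome $|0\rangle$ ("success") leaves the system in $\langle0|U|0\rangle|\phi\rangle$ normalized. A $(\beta,\varepsilon)$-master-QITE-algorithm for $H$ on $|\Psi\rangle$ is a procedure using such primitives that outputs $F_\beta(H)|\Psi\rangle/\|F_\beta(H)|\Psi\rangle\|$ up to trace-distance error $\varepsilon$ with unit probability; its query complexity is the sum of the query complexities of all primitives applied. The fragmented QITE algorithm: set $l=1$, prepare the system in $|\Psi\rangle$ and ancillas in $|0\rangle$; while $l\le r$: apply $P_l$, measure the ancillas in the computational basis; if the outcome is $|0\rangle$ set $l\to l+1$, otherwise restart from scratch (fresh preparation of $|\Psi\rangle$, $l=1$). *)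

theory Defs
  imports Complex_Main "Jordan_Normal_Form.Char_Poly"
begin

definition cvnorm :: "complex vec \<Rightarrow> real" where
  "cvnorm v = sqrt (\<Sum>i<dim_vec v. (cmod (v $ i))\<^sup>2)"

definition cinner :: "complex vec \<Rightarrow> complex vec \<Rightarrow> complex" where
  "cinner v w = (\<Sum>i<dim_vec v. cnj (v $ i) * w $ i)"

definition adj :: "complex mat \<Rightarrow> complex mat" where
  "adj A = mat (dim_col A) (dim_row A) (\<lambda>(i,j). cnj (A $$ (j,i)))"

definition unitary_mat :: "nat \<Rightarrow> complex mat \<Rightarrow> bool" where
  "unitary_mat d U \<longleftrightarrow> U \<in> carrier_mat d d \<and> adj U * U = 1\<^sub>m d"

definition hermitian_mat :: "nat \<Rightarrow> complex mat \<Rightarrow> bool" where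
  "hermitian_mat d H \<longleftrightarrow> H \<in> carrier_mat d d \<and> adj H = H"

definition op_norm :: "complex mat \<Rightarrow> real" where
  "op_norm A = Sup {cvnorm (A *\<^sub>v v) | v. v \<in> carrier_vec (dim_col A) \<and> cvnorm v = 1}"

definition mat_exp :: "complex mat \<Rightarrow> complex mat" where
  "mat_exp A = mat (dim_row A) (dim_col A)
     (\<lambda>(i,j). \<Sum>k. (A ^\<^sub>m k) $$ (i,j) / of_nat (fact k))"

text \<open>Smallest eigenvalue of a Hermitian matrix (its eigenvalues are real).\<close>
definition lam_min :: "complex mat \<Rightarrow> real" where
  "lam_min H = Min {Re k | k. eigenvalue H k}"

definition F_op :: "real \<Rightarrow> complex mat \<Rightarrow> complex mat" where
  "F_op b H = mat_exp ((- complex_of_real b) \<cdot>\<^sub>m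
                 (H - complex_of_real (lam_min H) \<cdot>\<^sub>m 1\<^sub>m (dim_row H)))"

definition p_psi :: "complex mat \<Rightarrow> complex vec \<Rightarrow> real \<Rightarrow> real" where
  "p_psi H \<Psi> b = (cvnorm (F_op b H *\<^sub>v \<Psi>))\<^sup>2"

definition normalize_vec :: "complex vec \<Rightarrow> complex vec" where
  "normalize_vec v = complex_of_real (1 / cvnorm v) \<cdot>\<^sub>v v"

text \<open>Trace distance between the pure states \<open>|\<phi>\<rangle>\<langle>\<phi>|\<close> and \<open>|\<psi>\<rangle>\<langle>\<psi>|\<close>
  of unit vectors (closed form of half the trace norm of their difference).\<close>
definition trace_dist_pure :: "complex vec \<Rightarrow> complex vec \<Rightarrow> real" where
  "trace_dist_pure \<phi> \<psi> = sqrt (1 - (cmod (cinner \<phi> \<psi>))\<^sup>2)"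

text \<open>System \<open>\<otimes>\<close> ancilla with system dimension \<open>d\<close> and ancilla dimension \<open>m\<close>;
  basis index of \<open>|i\<rangle>|a\<rangle>\<close> is \<open>i * m + a\<close>; ancilla state \<open>|0\<rangle>\<close> is basis vector \<open>a = 0\<close>.
  \<open>anc0_block d m U\<close> is \<open>\<langle>0|U|0\<rangle>\<close>, an operator on the system.\<close>
definition anc0_block :: "nat \<Rightarrow> nat \<Rightarrow> complex mat \<Rightarrow> complex mat" where
  "anc0_block d m U = mat d d (\<lambda>(i,j). U $$ (i * m, j * m))"

definition block_encoding ::
  "nat \<Rightarrow> nat \<Rightarrow> real \<Rightarrow> real \<Rightarrow> complex mat \<Rightarrow> complex mat \<Rightarrow> bool" where
  "block_encoding d m eps alpha A U \<longleftrightarrow>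
     0 < m \<and> unitary_mat (d * m) U \<and>
     op_norm (complex_of_real alpha \<cdot>\<^sub>m A - anc0_block d m U) \<le> eps"

text \<open>A \<open>(b,\<epsilon>',\<alpha>)\<close>-QITE primitive for \<open>H\<close> is represented by the unitary \<open>U\<close>
  (on system \<open>\<otimes>\<close> \<open>m\<close>-dimensional ancilla) that its circuit implements; its query
  complexity is carried along as a separate natural number.\<close>
definition qite_primitive ::
  "nat \<Rightarrow> complex mat \<Rightarrow> real \<Rightarrow> real \<Rightarrow> real \<Rightarrow> nat \<Rightarrow> complex mat \<Rightarrow> bool" where
  "qite_primitive d H b eps' alpha m U \<longleftrightarrow> block_encoding d m eps' alpha (F_op b H) U"

text \<open>Within a single attempt: post-measurement (normalized) system state after
  primitives \<open>P_1,\<dots>,P_l\<close> all succeeded.  \<open>M l\<close> is \<open>\<langle>0|U_l|0\<rangle>\<close>.\<close>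
fun frag_state :: "(nat \<Rightarrow> complex mat) \<Rightarrow> complex vec \<Rightarrow> nat \<Rightarrow> complex vec" where
  "frag_state M \<Psi> 0 = \<Psi>"
| "frag_state M \<Psi> (Suc l) = normalize_vec (M (Suc l) *\<^sub>v frag_state M \<Psi> l)"

text \<open>Born-rule probability that \<open>P_l\<close> succeeds given that \<open>P_1..P_{l-1}\<close> succeeded.\<close>
definition frag_succ_prob :: "(nat \<Rightarrow> complex mat) \<Rightarrow> complex vec \<Rightarrow> nat \<Rightarrow> real" where
  "frag_succ_prob M \<Psi> l = (cvnorm (M l *\<^sub>v frag_state M \<Psi> (l - 1)))\<^sup>2"

text \<open>Probability that, within one attempt, \<open>P_l\<close> gets applied.\<close>
definition frag_reach_prob :: "(nat \<Rightarrow> complex mat) \<Rightarrow> complex vec \<Rightarrow> nat \<Rightarrow> real" where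
  "frag_reach_prob M \<Psi> l = (\<Prod>k\<in>{1..<l}. frag_succ_prob M \<Psi> k)"

definition frag_attempt_succ :: "(nat \<Rightarrow> complex mat) \<Rightarrow> complex vec \<Rightarrow> nat \<Rightarrow> real" where
  "frag_attempt_succ M \<Psi> r = (\<Prod>k\<in>{1..r}. frag_succ_prob M \<Psi> k)"

text \<open>Restart loop: attempt \<open>t\<close> (counting from 0) happens iff attempts \<open>0..t-1\<close> all
  failed.  Probability that the algorithm halts (some attempt succeeds):\<close>
definition frag_halt_prob :: "(nat \<Rightarrow> complex mat) \<Rightarrow> complex vec \<Rightarrow> nat \<Rightarrow> real" where
  "frag_halt_prob M \<Psi> r =
     (\<Sum>t. (1 - frag_attempt_succ M \<Psi> r) ^ t * frag_attempt_succ M \<Psi> r)"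

definition frag_expected_runs :: "(nat \<Rightarrow> complex mat) \<Rightarrow> complex vec \<Rightarrow> nat \<Rightarrow> nat \<Rightarrow> real" where
  "frag_expected_runs M \<Psi> r l =
     (\<Sum>t. (1 - frag_attempt_succ M \<Psi> r) ^ t * frag_reach_prob M \<Psi> l)"

end

theory Submission
  imports Defs "Jordan_Normal_Form.Spectral_Radius" "Jordan_Normal_Form.Schur_Decomposition" "HOL-Analysis.L2_Norm"
begin

lemma cvnorm_L2: "cvnorm v = L2_set (\<lambda>i. cmod (v $ i)) {..<dim_vec v}"
  unfolding cvnorm_def L2_set_def by simp

lemma cvnorm_nonneg[simp]: "0 \<le> cvnorm v"
  unfolding cvnorm_def by (intro real_sqrt_ge_zero sum_nonneg) simp

lemma cvnorm_sq: "(cvnorm v)\<^sup>2 = (\<Sum>i<dim_vec v. (cmod (v $ i))\<^sup>2)"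
proof -
  have "0 \<le> (\<Sum>i<dim_vec v. (cmod (v $ i))\<^sup>2)" by (intro sum_nonneg) simp
  thus ?thesis unfolding cvnorm_def by simp
qed

lemma cvnorm_add_le:
  assumes "dim_vec v = dim_vec w"
  shows "cvnorm (v + w) \<le> cvnorm v + cvnorm w"
proof -
  have "cvnorm (v + w) = L2_set (\<lambda>i. cmod (v $ i + w $ i)) {..<dim_vec w}"
    unfolding cvnorm_L2 using assms by (intro L2_set_cong) auto
  also have "\<dots> \<le> L2_set (\<lambda>i. cmod (v $ i) + cmod (w $ i)) {..<dim_vec w}"
    by (intro L2_set_mono) (auto simp: norm_triangle_ineq)
  also have "\<dots> \<le> cvnorm v + cvnorm w"
    unfolding cvnorm_L2 using assms by (simp add: L2_set_triangle_ineq)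
  finally show ?thesis .
qed

lemma cvnorm_smult: "cvnorm (c \<cdot>\<^sub>v v) = cmod c * cvnorm v"
proof -
  have "cvnorm (c \<cdot>\<^sub>v v) = L2_set (\<lambda>i. cmod c * cmod (v $ i)) {..<dim_vec v}"
    unfolding cvnorm_L2 by (intro L2_set_cong) (auto simp: norm_mult)
  also have "\<dots> = cmod c * cvnorm v"
    unfolding cvnorm_L2 by (simp add: L2_set_right_distrib)
  finally show ?thesis .
qed

lemma cvnorm_uminus: "cvnorm (- v) = cvnorm v"
  unfolding cvnorm_def by simp

lemma cvnorm_diff_sym: assumes "dim_vec v = dim_vec w" shows "cvnorm (v - w) = cvnorm (w - v)"
  unfolding cvnorm_def using assms by (simp add: norm_minus_commute)

lemma cvnorm_diff_le:
  assumes "dim_vec v = dim_vec w"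
  shows "cvnorm v \<le> cvnorm w + cvnorm (v - w)"
proof -
  have "v = w + (v - w)" using assms by (intro eq_vecI) auto
  hence "cvnorm v = cvnorm (w + (v - w))" by simp
  also have "\<dots> \<le> cvnorm w + cvnorm (v - w)" using assms by (intro cvnorm_add_le) auto
  finally show ?thesis .
qed

lemma cvnorm_diff_tri:
  assumes "dim_vec u = dim_vec v" "dim_vec v = dim_vec w"
  shows "cvnorm (u - w) \<le> cvnorm (u - v) + cvnorm (v - w)"
proof -
  have "u - w = (u - v) + (v - w)" using assms by (intro eq_vecI) auto
  thus ?thesis using assms cvnorm_add_le[of "u - v" "v - w"] by simp
qed

lemma cvnorm_zero_iff: "cvnorm v = 0 \<longleftrightarrow> v = 0\<^sub>v (dim_vec v)"
proof -
  have "cvnorm v = 0 \<longleftrightarrow> (\<forall>i\<in>{..<dim_vec v}. cmod (v $ i) = 0)"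
    unfolding cvnorm_L2 by (rule L2_set_eq_0_iff) simp
  also have "\<dots> \<longleftrightarrow> v = 0\<^sub>v (dim_vec v)"
    by (auto simp: vec_eq_iff)
  finally show ?thesis .
qed

lemma cvnorm_zero_vec[simp]: "cvnorm (0\<^sub>v n) = 0"
  using cvnorm_zero_iff[of "0\<^sub>v n"] by simp

lemma cinner_self: "cinner v v = complex_of_real ((cvnorm v)\<^sup>2)"
  unfolding cinner_def cvnorm_sq of_real_sum
  by (intro sum.cong refl) (simp only: of_real_power[symmetric] complex_norm_square, simp add: mult.commute)

lemma cinner_mat:
  assumes A: "A \<in> carrier_mat n k" and v: "v \<in> carrier_vec k" and w: "w \<in> carrier_vec n"
  shows "cinner (A *\<^sub>v v) w = cinner v (adj A *\<^sub>v w)"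
proof -
  have "cinner (A *\<^sub>v v) w = (\<Sum>i<n. cnj (\<Sum>j<k. A $$ (i,j) * v $ j) * w $ i)"
    unfolding cinner_def using A v
    by (intro sum.cong) (auto simp: scalar_prod_def atLeast0LessThan)
  also have "\<dots> = (\<Sum>i<n. \<Sum>j<k. cnj (A $$ (i,j)) * cnj (v $ j) * w $ i)"
    by (simp add: sum_distrib_right)
  also have "\<dots> = (\<Sum>i<n. \<Sum>j<k. cnj (v $ j) * (cnj (A $$ (i,j)) * w $ i))"
    by (intro sum.cong refl) (simp add: mult_ac)
  also have "\<dots> = (\<Sum>j<k. \<Sum>i<n. cnj (v $ j) * (cnj (A $$ (i,j)) * w $ i))"
    by (rule sum.swap)
  also have "\<dots> = (\<Sum>j<k. cnj (v $ j) * (\<Sum>i<n. cnj (A $$ (i,j)) * w $ i))"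
    by (simp add: sum_distrib_left)
  also have "\<dots> = cinner v (adj A *\<^sub>v w)"
    unfolding cinner_def using A v w
    by (intro sum.cong) (auto simp: scalar_prod_def atLeast0LessThan adj_def)
  finally show ?thesis .
qed

lemma adj_carrier[simp]: "A \<in> carrier_mat n k \<Longrightarrow> adj A \<in> carrier_mat k n"
  unfolding adj_def by auto

lemma adj_dims[simp]: "dim_row (adj A) = dim_col A" "dim_col (adj A) = dim_row A"
  unfolding adj_def by auto

lemma adj_index[simp]: "i < dim_col A \<Longrightarrow> j < dim_row A \<Longrightarrow> adj A $$ (i,j) = cnj (A $$ (j,i))"
  unfolding adj_def by auto

lemma adj_adj[simp]: "adj (adj A) = A"
  by (intro eq_matI) auto

lemma adj_mult:
  assumes "A \<in> carrier_mat n k" "B \<in> carrier_mat k l"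
  shows "adj (A * B) = adj B * adj A"
  using assms
  by (intro eq_matI) (auto simp: scalar_prod_def sum_conjugate[symmetric] mult.commute intro!: sum.cong)

lemma adj_one[simp]: "adj (1\<^sub>m n) = 1\<^sub>m n"
  by (intro eq_matI) auto

lemma unitary_right:
  assumes "unitary_mat n U"
  shows "U * adj U = 1\<^sub>m n"
  using assms unfolding unitary_mat_def
  by (intro mat_mult_left_right_inverse[of "adj U" n U]) auto

lemma unitary_adj: assumes "unitary_mat n U" shows "unitary_mat n (adj U)"
  using unitary_right[OF assms] assms unfolding unitary_mat_def by auto

lemma unitary_mult:
  assumes U: "unitary_mat n U" and V: "unitary_mat n V"
  shows "unitary_mat n (U * V)"
proof -
  have Uc: "U \<in> carrier_mat n n" and Vc: "V \<in> carrier_mat n n"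
    using U V unfolding unitary_mat_def by auto
  have aU: "adj U \<in> carrier_mat n n" and aV: "adj V \<in> carrier_mat n n" using Uc Vc by auto
  have "adj (U * V) * (U * V) = adj V * adj U * (U * V)"
    using Uc Vc by (simp add: adj_mult)
  also have "\<dots> = adj V * (adj U * (U * V))" using aU aV Uc Vc by (intro assoc_mult_mat) auto
  also have "adj U * (U * V) = (adj U * U) * V" using aU Uc Vc by (intro assoc_mult_mat[symmetric]) auto
  also have "\<dots> = V" using U Vc unfolding unitary_mat_def by simp
  also have "adj V * V = 1\<^sub>m n" using V unfolding unitary_mat_def by simp
  finally show ?thesis unfolding unitary_mat_def using Uc Vc by auto
qed

lemma unitary_norm:
  assumes U: "unitary_mat n U" and x: "x \<in> carrier_vec n"
  shows "cvnorm (U *\<^sub>v x) = cvnorm x"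
proof -
  have Uc: "U \<in> carrier_mat n n" using U unfolding unitary_mat_def by auto
  have "complex_of_real ((cvnorm (U *\<^sub>v x))\<^sup>2) = cinner (U *\<^sub>v x) (U *\<^sub>v x)"
    by (simp add: cinner_self)
  also have "\<dots> = cinner x (adj U *\<^sub>v (U *\<^sub>v x))"
    using Uc x by (intro cinner_mat) auto
  also have "adj U *\<^sub>v (U *\<^sub>v x) = (adj U * U) *\<^sub>v x"
    using Uc x by (simp add: assoc_mult_mat_vec[symmetric, of _ n n _ n])
  also have "\<dots> = x" using U x unfolding unitary_mat_def by simp
  finally have "complex_of_real ((cvnorm (U *\<^sub>v x))\<^sup>2) = complex_of_real ((cvnorm x)\<^sup>2)"
    by (simp only: cinner_self)
  hence "(cvnorm (U *\<^sub>v x))\<^sup>2 = (cvnorm x)\<^sup>2" by (simp only: of_real_eq_iff)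
  thus ?thesis by (simp add: power2_eq_iff_nonneg)
qed

definition sdiag :: "nat \<Rightarrow> (nat \<Rightarrow> complex) \<Rightarrow> complex mat" where
  "sdiag n g = mat n n (\<lambda>(i,j). if i = j then g i else 0)"

lemma sdiag_carrier[simp]: "sdiag n g \<in> carrier_mat n n"
  unfolding sdiag_def by auto

lemma mult_sdiag:
  assumes U: "U \<in> carrier_mat m n"
  shows "U * sdiag n g = mat m n (\<lambda>(i,j). U $$ (i,j) * g j)"
proof (rule eq_matI)
  fix i j assume "i < dim_row (mat m n (\<lambda>(i,j). U $$ (i,j) * g j))" "j < dim_col (mat m n (\<lambda>(i,j). U $$ (i,j) * g j))"
  hence i: "i < m" and j: "j < n" by auto
  have "(U * sdiag n g) $$ (i,j) = (\<Sum>l\<in>{0..<n}. U $$ (i,l) * (if l = j then g j else 0))"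
    using U i j unfolding sdiag_def by (auto simp: scalar_prod_def intro!: sum.cong)
  also have "\<dots> = U $$ (i,j) * g j" using j by (simp add: if_distrib cong: if_cong)
  finally show "(U * sdiag n g) $$ (i,j) = mat m n (\<lambda>(i,j). U $$ (i,j) * g j) $$ (i,j)"
    using i j by simp
qed (use U in \<open>auto simp: sdiag_def\<close>)

lemma UDU_index:
  assumes U: "U \<in> carrier_mat n n" and i: "i < n" and j: "j < n"
  shows "(U * sdiag n g * adj U) $$ (i,j) = (\<Sum>k<n. U $$ (i,k) * g k * cnj (U $$ (j,k)))"
  using U i j unfolding mult_sdiag[OF U]
  by (auto simp: scalar_prod_def atLeast0LessThan intro!: sum.cong)

lemma unitary_cancel_left:
  assumes "unitary_mat n U" "X \<in> carrier_mat n k"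
  shows "U * (adj U * X) = X" "adj U * (U * X) = X"
proof -
  have Uc: "U \<in> carrier_mat n n" using assms unfolding unitary_mat_def by auto
  have "U * (adj U * X) = (U * adj U) * X" using Uc assms by (intro assoc_mult_mat[symmetric]) auto
  also have "\<dots> = X" using unitary_right[OF assms(1)] assms by simp
  finally show "U * (adj U * X) = X" .
  have "adj U * (U * X) = (adj U * U) * X" using Uc assms by (intro assoc_mult_mat[symmetric]) auto
  also have "\<dots> = X" using assms unfolding unitary_mat_def by simp
  finally show "adj U * (U * X) = X" .
qed

lemma cinner_conj_prod: "dim_vec v = dim_vec w \<Longrightarrow> v \<bullet>c w = cinner w v"
  unfolding cinner_def scalar_prod_def
  by (auto simp: atLeast0LessThan mult.commute intro!: sum.cong)

lemma spectral:
  assumes "hermitian_mat n A"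
  shows "\<exists>U \<mu>. unitary_mat n U \<and> A = U * sdiag n (\<lambda>k. complex_of_real (\<mu> k)) * adj U"
  using assms
proof (induction n arbitrary: A)
  case 0
  then have A: "A \<in> carrier_mat 0 0" by (simp add: hermitian_mat_def)
  show ?case
    by (rule exI[of _ "1\<^sub>m 0"], rule exI[of _ "\<lambda>k::nat. 0::real"])
      (use A in \<open>auto simp: unitary_mat_def sdiag_def intro!: eq_matI\<close>)
next
  case (Suc n)
  define N where "N = Suc n"
  have A: "A \<in> carrier_mat N N" and hA: "adj A = A"
    using Suc.prems by (auto simp: hermitian_mat_def N_def)
  obtain e where "e \<in> spectrum A" using spectrum_non_empty[OF A] N_def by auto
  then obtain v where ev: "eigenvector A v e" by (auto simp: spectrum_def eigenvalue_def)
  hence v: "v \<in> carrier_vec N" and v0: "v \<noteq> 0\<^sub>v N" and Av: "A *\<^sub>v v = e \<cdot>\<^sub>v v"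
    using A by (auto simp: eigenvector_def)
  interpret cof_vec_space N "TYPE(complex)" .
  define b where "b = basis_completion v"
  from basis_completion[OF v v0, folded b_def]
  have dist_b: "distinct b" and indep: "\<not> lin_dep (set b)" and bc: "set b \<subseteq> carrier_vec N"
    and hdb: "hd b = v" and len_b: "length b = N" by auto
  from hdb len_b obtain vs where bv: "b = v # vs" by (cases b) (auto simp: N_def)
  define ws where "ws = gram_schmidt N b"
  from gram_schmidt_result[OF bc dist_b indep ws_def]
  have wsc: "set ws \<subseteq> carrier_vec N" and orth: "corthogonal ws" and len_ws: "length ws = N"
    by (auto simp: len_b)
  have hdws: "hd ws = v" using gram_schmidt_hd[OF v, of vs] bv ws_def by simp
  have ws0: "ws ! 0 = v" using hdws len_ws by (cases ws) (auto simp: N_def)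
  have wsi: "ws ! i \<in> carrier_vec N" if "i < N" for i using wsc len_ws that by auto
  have ip: "cinner (ws ! i) (ws ! j) = 0 \<longleftrightarrow> i \<noteq> j" if "i < N" "j < N" for i j
  proof -
    have "ws ! j \<bullet>c ws ! i = 0 \<longleftrightarrow> j \<noteq> i" using corthogonalD[OF orth] that len_ws by auto
    moreover have "ws ! j \<bullet>c ws ! i = cinner (ws ! i) (ws ! j)"
      using wsi[OF that(1)] wsi[OF that(2)] by (intro cinner_conj_prod) auto
    ultimately show ?thesis by auto
  qed
  have npos: "cvnorm (ws ! i) > 0" if "i < N" for i
  proof -
    have "cinner (ws ! i) (ws ! i) \<noteq> 0" using ip[OF that that] by simp
    hence "cvnorm (ws ! i) \<noteq> 0" by (auto simp: cinner_self)
    thus ?thesis using cvnorm_nonneg[of "ws ! i"] by linarith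
  qed
  define c where "c i = complex_of_real (1 / cvnorm (ws ! i))" for i
  define W where "W = mat N N (\<lambda>(k,j). c j * ws ! j $ k)"
  have Wc: "W \<in> carrier_mat N N" unfolding W_def by auto
  have WW: "adj W * W = 1\<^sub>m N"
  proof (rule eq_matI)
    fix i j assume "i < dim_row (1\<^sub>m N)" "j < dim_col (1\<^sub>m N)"
    hence i: "i < N" and j: "j < N" by auto
    have "(adj W * W) $$ (i,j) = (\<Sum>k<N. cnj (c i * ws ! i $ k) * (c j * ws ! j $ k))"
      using i j Wc by (auto simp: scalar_prod_def atLeast0LessThan W_def intro!: sum.cong)
    also have "\<dots> = cnj (c i) * c j * cinner (ws ! i) (ws ! j)"
      unfolding cinner_def using wsi[OF i] by (auto simp: sum_distrib_left mult_ac intro!: sum.cong)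
    also have "\<dots> = 1\<^sub>m N $$ (i,j)"
    proof (cases "i = j")
      case True
      have "cinner (ws ! i) (ws ! i) = complex_of_real ((cvnorm (ws ! i))\<^sup>2)" by (rule cinner_self)
      thus ?thesis using True i npos[OF i] unfolding c_def
        by (simp add: power2_eq_square) 
    next
      case False
      thus ?thesis using ip[OF i j] i j by simp
    qed
    finally show "(adj W * W) $$ (i,j) = 1\<^sub>m N $$ (i,j)" .
  qed (use Wc in auto)
  have uW: "unitary_mat N W" using WW Wc unfolding unitary_mat_def by auto
  have colW: "col W 0 = c 0 \<cdot>\<^sub>v v"
    using v ws0 by (intro eq_vecI) (auto simp: W_def N_def)
  define A' where "A' = adj W * A * W"
  have A'c: "A' \<in> carrier_mat N N" using A Wc unfolding A'_def by auto
  have A'assoc: "A' = adj W * (A * W)" unfolding A'_def using A Wc by (intro assoc_mult_mat) auto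
  have hA': "adj A' = A'"
  proof -
    have "adj A' = adj (A * W) * adj (adj W)"
      unfolding A'assoc using A Wc by (intro adj_mult[of _ N N _ N]) auto
    also have "\<dots> = (adj W * adj A) * W" using A Wc by (simp add: adj_mult[of A N N W N])
    also have "\<dots> = A'" unfolding A'_def hA ..
    finally show ?thesis .
  qed
  have colAW: "col (A * W) 0 = e \<cdot>\<^sub>v col W 0"
  proof -
    have "col (A * W) 0 = A *\<^sub>v col W 0" using A Wc by (intro col_mult2) (auto simp: N_def)
    also have "\<dots> = c 0 \<cdot>\<^sub>v (A *\<^sub>v v)" unfolding colW using A v by (rule mult_mat_vec)
    also have "\<dots> = e \<cdot>\<^sub>v col W 0" unfolding Av colW by (auto simp: smult_smult_assoc mult.commute)
    finally show ?thesis .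
  qed
  have A'col: "A' $$ (i,0) = (if i = 0 then e else 0)" if i: "i < N" for i
  proof -
    have "A' $$ (i,0) = row (adj W) i \<bullet> col (A * W) 0"
      unfolding A'assoc using i A Wc by (auto simp: N_def)
    also have "\<dots> = e * (row (adj W) i \<bullet> col W 0)"
      unfolding colAW using Wc by (intro scalar_prod_smult_right) auto
    also have "row (adj W) i \<bullet> col W 0 = (adj W * W) $$ (i,0)"
      using i Wc by (auto simp: N_def)
    finally show ?thesis using WW i by (simp add: N_def)
  qed
  have e_real: "e = complex_of_real (Re e)"
  proof -
    have "adj A' $$ (0,0) = cnj (A' $$ (0,0))" using A'c by (auto simp: N_def)
    hence "cnj e = e" using hA' A'col[of 0] by (simp add: N_def)
    hence "Im (cnj e) = Im e" by simp
    hence "Im e = 0" by simp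
    thus ?thesis by (simp add: complex_eq_iff)
  qed
  have A'row: "A' $$ (0,j) = 0" if j: "j < N" "j \<noteq> 0" for j
  proof -
    have "A' $$ (0,j) = adj A' $$ (0,j)" using hA' by simp
    also have "\<dots> = cnj (A' $$ (j,0))" using A'c j by (auto simp: N_def)
    finally show ?thesis using A'col[OF j(1)] j by simp
  qed
  define A3 where "A3 = mat n n (\<lambda>(i,j). A' $$ (Suc i, Suc j))"
  have hA3: "hermitian_mat n A3"
  proof -
    have "adj A3 = A3"
    proof (rule eq_matI)
      fix i j assume "i < dim_row A3" "j < dim_col A3"
      hence i: "i < n" and j: "j < n" by (auto simp: A3_def)
      have "adj A3 $$ (i,j) = cnj (A' $$ (Suc j, Suc i))" using i j by (simp add: A3_def)
      also have "\<dots> = adj A' $$ (Suc i, Suc j)" using i j A'c by (simp add: N_def)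
      finally show "adj A3 $$ (i,j) = A3 $$ (i,j)" using hA' i j by (simp add: A3_def)
    qed (auto simp: A3_def)
    thus ?thesis unfolding hermitian_mat_def A3_def by auto
  qed
  from Suc.IH[OF hA3] obtain V \<mu>3 where uV: "unitary_mat n V"
    and A3eq: "A3 = V * sdiag n (\<lambda>k. complex_of_real (\<mu>3 k)) * adj V" by blast
  have Vc: "V \<in> carrier_mat n n" using uV unfolding unitary_mat_def by auto
  define V' where "V' = mat N N (\<lambda>(i,j). if i = 0 then (if j = 0 then 1 else 0)
      else if j = 0 then 0 else V $$ (i - 1, j - 1))"
  have V'c: "V' \<in> carrier_mat N N" unfolding V'_def by auto
  have VV: "adj V * V = 1\<^sub>m n" using uV unfolding unitary_mat_def by auto
  have V'V': "adj V' * V' = 1\<^sub>m N"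
  proof (rule eq_matI)
    fix i j assume "i < dim_row (1\<^sub>m N)" "j < dim_col (1\<^sub>m N)"
    hence i: "i < N" and j: "j < N" by auto
    have "(adj V' * V') $$ (i,j) = (\<Sum>k<N. cnj (V' $$ (k,i)) * V' $$ (k,j))"
      using i j V'c by (auto simp: scalar_prod_def atLeast0LessThan intro!: sum.cong)
    also have "\<dots> = cnj (V' $$ (0,i)) * V' $$ (0,j) + (\<Sum>k<n. cnj (V' $$ (Suc k,i)) * V' $$ (Suc k,j))"
      unfolding N_def by (rule sum.lessThan_Suc_shift)
    also have "\<dots> = 1\<^sub>m N $$ (i,j)"
    proof (cases i)
      case 0
      then show ?thesis using i j by (cases j) (auto simp: V'_def N_def)
    next
      case (Suc i')
      note i' = this
      show ?thesis
      proof (cases j)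
        case 0
        then show ?thesis using i j i' by (auto simp: V'_def N_def)
      next
        case (Suc j')
        have "(\<Sum>k<n. cnj (V' $$ (Suc k,i)) * V' $$ (Suc k,j)) = (adj V * V) $$ (i',j')"
          using i j i' Suc Vc by (auto simp: V'_def N_def scalar_prod_def atLeast0LessThan intro!: sum.cong)
        then show ?thesis using i j i' Suc VV by (auto simp: V'_def N_def)
      qed
    qed
    finally show "(adj V' * V') $$ (i,j) = 1\<^sub>m N $$ (i,j)" .
  qed (use V'c in auto)
  have uV': "unitary_mat N V'" using V'V' V'c unfolding unitary_mat_def by auto
  define \<mu> where "\<mu> k = (if k = 0 then Re e else \<mu>3 (k - 1))" for k
  define D where "D = sdiag N (\<lambda>k. complex_of_real (\<mu> k))"
  have Dc: "D \<in> carrier_mat N N" unfolding D_def by auto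
  have A'eq: "A' = V' * D * adj V'"
  proof (rule eq_matI)
    fix i j assume "i < dim_row (V' * D * adj V')" "j < dim_col (V' * D * adj V')"
    hence i: "i < N" and j: "j < N" using V'c by auto
    have "(V' * D * adj V') $$ (i,j) = (\<Sum>k<N. V' $$ (i,k) * complex_of_real (\<mu> k) * cnj (V' $$ (j,k)))"
      unfolding D_def by (rule UDU_index[OF V'c i j])
    also have "\<dots> = V' $$ (i,0) * complex_of_real (\<mu> 0) * cnj (V' $$ (j,0)) +
       (\<Sum>k<n. V' $$ (i,Suc k) * complex_of_real (\<mu> (Suc k)) * cnj (V' $$ (j,Suc k)))"
      unfolding N_def by (rule sum.lessThan_Suc_shift)
    also have "\<dots> = A' $$ (i,j)"
    proof (cases i)
      case 0
      then show ?thesis using i j A'col A'row e_real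
        by (cases j) (auto simp: V'_def N_def \<mu>_def)
    next
      case (Suc i')
      note i' = this
      show ?thesis
      proof (cases j)
        case 0
        then show ?thesis using i j i' A'col by (auto simp: V'_def N_def)
      next
        case (Suc j')
        have "(\<Sum>k<n. V' $$ (i,Suc k) * complex_of_real (\<mu> (Suc k)) * cnj (V' $$ (j,Suc k)))
           = (V * sdiag n (\<lambda>k. complex_of_real (\<mu>3 k)) * adj V) $$ (i',j')"
          using i j i' Suc by (subst UDU_index[OF Vc]) (auto simp: V'_def N_def \<mu>_def)
        also have "\<dots> = A' $$ (i,j)" using i j i' Suc unfolding A3eq[symmetric]
          by (auto simp: A3_def N_def)
        finally show ?thesis using i j i' Suc by (auto simp: V'_def N_def)
      qed
    qed
    finally show "A' $$ (i,j) = (V' * D * adj V') $$ (i,j)" by simp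
  qed (use V'c Dc A'c in auto)
  define U where "U = W * V'"
  have uU: "unitary_mat N U" unfolding U_def by (rule unitary_mult[OF uW uV'])
  have aWc: "adj W \<in> carrier_mat N N" and aV'c: "adj V' \<in> carrier_mat N N" using Wc V'c by auto
  have WaW: "W * adj W = 1\<^sub>m N" by (rule unitary_right[OF uW])
  have sqm: "X * Y \<in> carrier_mat N N" if "X \<in> carrier_mat N N" "Y \<in> carrier_mat N N" for X Y
    using that by auto
  have "A = W * A' * adj W"
  proof -
    have "W * A' * adj W = W * (adj W * (A * (W * adj W)))"
      unfolding A'_def using Wc aWc A by (simp add: sqm assoc_mult_mat[of _ N N _ N _ N])
    also have "\<dots> = A" using A unfolding WaW by (simp add: unitary_cancel_left(1)[OF uW])
    finally show ?thesis by simp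
  qed
  also have "\<dots> = U * D * adj U"
    unfolding A'eq U_def using Wc aWc V'c aV'c Dc
    by (simp add: sqm adj_mult[of _ N N _ N] assoc_mult_mat[of _ N N _ N _ N])
  finally show ?case using uU unfolding D_def N_def by blast
qed

lemma sdiag_mult: "sdiag n f * sdiag n g = sdiag n (\<lambda>i. f i * g i)"
  unfolding mult_sdiag[OF sdiag_carrier] by (intro eq_matI) (auto simp: sdiag_def)

lemma sdiag_one: "sdiag n (\<lambda>i. 1) = 1\<^sub>m n"
  by (intro eq_matI) (auto simp: sdiag_def)

lemma sdiag_dims[simp]: "dim_row (sdiag n g) = n" "dim_col (sdiag n g) = n"
  unfolding sdiag_def by auto

lemma sdiag_mult_vec: assumes "z \<in> carrier_vec n" "i < n" shows "(sdiag n g *\<^sub>v z) $ i = g i * z $ i"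
proof -
  have "(sdiag n g *\<^sub>v z) $ i = (\<Sum>ia\<in>{0..<n}. (if i = ia then g i else 0) * z $ ia)"
    using assms by (simp add: sdiag_def scalar_prod_def)
  also have "\<dots> = (\<Sum>ia\<in>{0..<n}. (if i = ia then g i * z $ ia else 0))"
    by (rule sum.cong) auto
  finally have "(sdiag n g *\<^sub>v z) $ i = (\<Sum>ia\<in>{0..<n}. (if i = ia then g i * z $ ia else 0))" .
  thus ?thesis using assms by simp
qed

lemma sdiag_mult_vec_carrier[simp]: "sdiag n g *\<^sub>v z \<in> carrier_vec n"
  unfolding carrier_vec_def by simp

lemma sdiag_norm_le:
  assumes z: "z \<in> carrier_vec n" and B: "0 \<le> B" and g: "\<And>i. i < n \<Longrightarrow> cmod (g i) \<le> B"
  shows "cvnorm (sdiag n g *\<^sub>v z) \<le> B * cvnorm z"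
proof -
  have "cvnorm (sdiag n g *\<^sub>v z) = L2_set (\<lambda>i. cmod (g i) * cmod (z $ i)) {..<n}"
    unfolding cvnorm_L2 using z by (intro L2_set_cong) (auto simp del: index_mult_mat_vec simp: sdiag_mult_vec norm_mult)
  also have "\<dots> \<le> L2_set (\<lambda>i. B * cmod (z $ i)) {..<n}"
    by (intro L2_set_mono mult_right_mono g) auto
  also have "\<dots> = B * cvnorm z" unfolding cvnorm_L2 using z B by (simp add: L2_set_right_distrib)
  finally show ?thesis .
qed

lemma UDU_pow:
  assumes U: "unitary_mat n U"
  shows "(U * sdiag n g * adj U) ^\<^sub>m k = U * sdiag n (\<lambda>i. g i ^ k) * adj U"
proof (induction k)
  case 0
  have Uc: "U \<in> carrier_mat n n" using U unfolding unitary_mat_def by auto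
  show ?case using Uc unitary_right[OF U] by (simp add: sdiag_one)
next
  case (Suc k)
  have Uc: "U \<in> carrier_mat n n" using U unfolding unitary_mat_def by auto
  have aUc: "adj U \<in> carrier_mat n n" using Uc by auto
  have sqm: "X * Y \<in> carrier_mat n n" if "X \<in> carrier_mat n n" "Y \<in> carrier_mat n n" for X Y
    using that by auto
  have "(U * sdiag n g * adj U) ^\<^sub>m Suc k = U * sdiag n (\<lambda>i. g i ^ k) * adj U * (U * sdiag n g * adj U)"
    using Suc by simp
  also have "\<dots> = U * (sdiag n (\<lambda>i. g i ^ k) * (adj U * (U * (sdiag n g * adj U))))"
    using Uc aUc by (simp add: sqm assoc_mult_mat[of _ n n _ n _ n])
  also have "adj U * (U * (sdiag n g * adj U)) = sdiag n g * adj U"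
    using aUc by (intro unitary_cancel_left(2)[OF U, of _ n] mult_carrier_mat[OF sdiag_carrier aUc])
  also have "U * (sdiag n (\<lambda>i. g i ^ k) * (sdiag n g * adj U)) = U * sdiag n (\<lambda>i. g i ^ Suc k) * adj U"
    using Uc aUc by (simp add: sqm assoc_mult_mat[of _ n n _ n _ n, symmetric] sdiag_mult mult.commute)
  finally show ?case .
qed

lemma mat_exp_UDU:
  assumes U: "unitary_mat n U"
  shows "mat_exp (U * sdiag n g * adj U) = U * sdiag n (\<lambda>i. exp (g i)) * adj U"
proof -
  have Uc: "U \<in> carrier_mat n n" using U unfolding unitary_mat_def by auto
  show ?thesis
  proof (rule eq_matI)
    fix i j assume "i < dim_row (U * sdiag n (\<lambda>i. exp (g i)) * adj U)" "j < dim_col (U * sdiag n (\<lambda>i. exp (g i)) * adj U)"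
    hence i: "i < n" and j: "j < n" using Uc by auto
    have "(\<lambda>k. \<Sum>p<n. U $$ (i,p) * (g p ^ k / fact k) * cnj (U $$ (j,p))) sums
        (\<Sum>p<n. U $$ (i,p) * exp (g p) * cnj (U $$ (j,p)))"
    proof (rule sums_sum)
      fix p
      have "(\<lambda>k. g p ^ k / fact k) sums exp (g p)"
        using exp_converges[of "g p"] by (simp add: scaleR_conv_of_real divide_inverse mult.commute)
      thus "(\<lambda>k. U $$ (i,p) * (g p ^ k / fact k) * cnj (U $$ (j,p))) sums (U $$ (i,p) * exp (g p) * cnj (U $$ (j,p)))"
        by (intro sums_mult sums_mult2)
    qed
    moreover have "((U * sdiag n g * adj U) ^\<^sub>m k) $$ (i,j) / of_nat (fact k) =
        (\<Sum>p<n. U $$ (i,p) * (g p ^ k / fact k) * cnj (U $$ (j,p)))" for k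
      unfolding UDU_pow[OF U] UDU_index[OF Uc i j]
      by (simp add: sum_divide_distrib of_nat_fact)
    ultimately have "mat_exp (U * sdiag n g * adj U) $$ (i,j) = (\<Sum>p<n. U $$ (i,p) * exp (g p) * cnj (U $$ (j,p)))"
      unfolding mat_exp_def using i j Uc by (auto dest: sums_unique)
    thus "mat_exp (U * sdiag n g * adj U) $$ (i,j) = (U * sdiag n (\<lambda>i. exp (g i)) * adj U) $$ (i,j)"
      unfolding UDU_index[OF Uc i j] .
  qed (use Uc in \<open>auto simp: mat_exp_def\<close>)
qed

lemma unitary_carrier: "unitary_mat n U \<Longrightarrow> U \<in> carrier_mat n n"
  unfolding unitary_mat_def by auto

lemma UDU_mult:
  assumes U: "unitary_mat n U"
  shows "(U * sdiag n f * adj U) * (U * sdiag n g * adj U) = U * sdiag n (\<lambda>i. f i * g i) * adj U"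
proof -
  have Uc: "U \<in> carrier_mat n n" using U unfolding unitary_mat_def by auto
  have aUc: "adj U \<in> carrier_mat n n" using Uc by auto
  have sqm: "X * Y \<in> carrier_mat n n" if "X \<in> carrier_mat n n" "Y \<in> carrier_mat n n" for X Y :: "complex mat"
    using that by auto
  have "(U * sdiag n f * adj U) * (U * sdiag n g * adj U) = U * (sdiag n f * (adj U * (U * (sdiag n g * adj U))))"
    using Uc aUc by (simp add: sqm assoc_mult_mat[of _ n n _ n _ n])
  also have "adj U * (U * (sdiag n g * adj U)) = sdiag n g * adj U"
    using aUc by (intro unitary_cancel_left(2)[OF U, of _ n] mult_carrier_mat[OF sdiag_carrier aUc])
  also have "U * (sdiag n f * (sdiag n g * adj U)) = U * sdiag n (\<lambda>i. f i * g i) * adj U"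
    using Uc aUc by (simp add: sqm assoc_mult_mat[of _ n n _ n _ n, symmetric] sdiag_mult)
  finally show ?thesis .
qed

lemma UDU_mult_U:
  assumes U: "unitary_mat n U"
  shows "(U * sdiag n g * adj U) * U = U * sdiag n g"
proof -
  have Uc: "U \<in> carrier_mat n n" using U unfolding unitary_mat_def by auto
  have aUc: "adj U \<in> carrier_mat n n" using Uc by auto
  have "(U * sdiag n g * adj U) * U = (U * sdiag n g) * (adj U * U)"
    using Uc aUc by (intro assoc_mult_mat[of _ n n _ n _ n]) auto
  also have "\<dots> = U * sdiag n g" using U Uc unfolding unitary_mat_def by simp
  finally show ?thesis .
qed

lemma col_U_sdiag:
  assumes Uc: "U \<in> carrier_mat n n" and p: "p < n"
  shows "col (U * sdiag n g) p = g p \<cdot>\<^sub>v col U p"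
  unfolding mult_sdiag[OF Uc] using Uc p by (intro eq_vecI) auto

lemma col_unitary_norm:
  assumes U: "unitary_mat n U" and p: "p < n"
  shows "cvnorm (col U p) = 1"
proof -
  have Uc: "U \<in> carrier_mat n n" using U unfolding unitary_mat_def by auto
  have "cinner (col U p) (col U p) = (adj U * U) $$ (p,p)"
    unfolding cinner_def using Uc p by (auto simp: scalar_prod_def atLeast0LessThan intro!: sum.cong)
  also have "\<dots> = 1" using U p unfolding unitary_mat_def by simp
  finally have "complex_of_real ((cvnorm (col U p))\<^sup>2) = complex_of_real 1" by (simp add: cinner_self)
  hence "(cvnorm (col U p))\<^sup>2 = 1" by (simp only: of_real_eq_iff)
  thus ?thesis using cvnorm_nonneg[of "col U p"] by (simp add: power2_eq_1_iff)
qed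

lemma eig_char:
  assumes U: "unitary_mat d U" and H: "H = U * sdiag d (\<lambda>k. complex_of_real (\<mu> k)) * adj U"
  shows "eigenvalue H k \<longleftrightarrow> (\<exists>p<d. k = complex_of_real (\<mu> p))"
proof -
  define D where "D = sdiag d (\<lambda>k. complex_of_real (\<mu> k))"
  have Uc: "U \<in> carrier_mat d d" using U unfolding unitary_mat_def by auto
  have aUc: "adj U \<in> carrier_mat d d" using Uc by auto
  have Dc: "D \<in> carrier_mat d d" unfolding D_def by simp
  have Hc: "H \<in> carrier_mat d d" using H Uc aUc by auto
  have HU: "H * U = U * D" unfolding H D_def by (rule UDU_mult_U[OF U])
  have aUH: "adj U * H = D * adj U"
  proof -
    have "adj U * H = adj U * (U * (D * adj U))" unfolding H D_def[symmetric]
      using Uc Dc aUc by (simp add: assoc_mult_mat[of _ d d _ d _ d])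
    also have "\<dots> = D * adj U" using Dc aUc by (intro unitary_cancel_left(2)[OF U, of _ d]) auto
    finally show ?thesis .
  qed
  show ?thesis
  proof
    assume "eigenvalue H k"
    then obtain v where v: "v \<in> carrier_vec d" and v0: "v \<noteq> 0\<^sub>v d" and Hv: "H *\<^sub>v v = k \<cdot>\<^sub>v v"
      unfolding eigenvalue_def eigenvector_def using Hc by auto
    define w where "w = adj U *\<^sub>v v"
    have wc: "w \<in> carrier_vec d" unfolding w_def using aUc v by auto
    have Dw: "D *\<^sub>v w = k \<cdot>\<^sub>v w"
    proof -
      have "D *\<^sub>v w = (D * adj U) *\<^sub>v v" unfolding w_def using Dc aUc v by (simp add: assoc_mult_mat_vec[of _ d d _ d])
      also have "\<dots> = adj U *\<^sub>v (H *\<^sub>v v)" unfolding aUH[symmetric] using aUc Hc v by (simp add: assoc_mult_mat_vec[of _ d d _ d])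
      also have "\<dots> = k \<cdot>\<^sub>v w" unfolding Hv w_def using aUc v by (rule mult_mat_vec)
      finally show ?thesis .
    qed
    have "w \<noteq> 0\<^sub>v d"
    proof
      assume w0: "w = 0\<^sub>v d"
      have "U *\<^sub>v w = (U * adj U) *\<^sub>v v" unfolding w_def using Uc aUc v by (simp add: assoc_mult_mat_vec[of _ d d _ d])
      also have "\<dots> = v" using unitary_right[OF U] v by simp
      finally have "v = U *\<^sub>v 0\<^sub>v d" using w0 by simp
      also have "\<dots> = 0\<^sub>v d" using Uc by (intro eq_vecI) (auto simp: scalar_prod_def)
      finally show False using v0 by simp
    qed
    then obtain p where p: "p < d" and wp: "w $ p \<noteq> 0" using wc by (auto simp: vec_eq_iff)
    have "(D *\<^sub>v w) $ p = complex_of_real (\<mu> p) * w $ p" unfolding D_def by (rule sdiag_mult_vec[OF wc p])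
    moreover have "(D *\<^sub>v w) $ p = k * w $ p" unfolding Dw using p wc by simp
    ultimately have "k = complex_of_real (\<mu> p)" using wp by simp
    thus "\<exists>p<d. k = complex_of_real (\<mu> p)" using p by blast
  next
    assume "\<exists>p<d. k = complex_of_real (\<mu> p)"
    then obtain p where p: "p < d" and k: "k = complex_of_real (\<mu> p)" by blast
    define v where "v = col U p"
    have vc: "v \<in> carrier_vec d" unfolding v_def using Uc by auto
    have "cvnorm v = 1" unfolding v_def by (rule col_unitary_norm[OF U p])
    hence v0: "v \<noteq> 0\<^sub>v d" by auto
    have "H *\<^sub>v v = col (H * U) p" unfolding v_def by (rule col_mult2[symmetric, OF Hc Uc p])
    also have "\<dots> = k \<cdot>\<^sub>v v" unfolding HU D_def k v_def by (rule col_U_sdiag[OF Uc p])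
    finally have "eigenvector H v k" unfolding eigenvector_def using vc v0 Hc by auto
    thus "eigenvalue H k" unfolding eigenvalue_def by blast
  qed
qed

lemma lam_min_char:
  assumes U: "unitary_mat d U" and H: "H = U * sdiag d (\<lambda>k. complex_of_real (\<mu> k)) * adj U" and d: "0 < d"
  shows "(\<forall>p<d. lam_min H \<le> \<mu> p) \<and> (\<exists>p<d. \<mu> p = lam_min H)"
proof -
  have S: "{Re k | k. eigenvalue H k} = \<mu> ` {..<d}"
    using eig_char[OF U H] by force
  have fin: "finite (\<mu> ` {..<d})" and ne: "\<mu> ` {..<d} \<noteq> {}" using d by auto
  have "lam_min H = Min (\<mu> ` {..<d})" unfolding lam_min_def S ..
  thus ?thesis using Min_le[OF fin] Min_in[OF fin ne] by auto
qed

lemma F_op_spec: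
  assumes hH: "hermitian_mat d H" and d: "0 < d"
  shows "\<exists>U \<mu>. unitary_mat d U \<and> (\<forall>p<d. lam_min H \<le> \<mu> p) \<and> (\<exists>p<d. \<mu> p = lam_min H) \<and>
    (\<forall>b. F_op b H = U * sdiag d (\<lambda>p. complex_of_real (exp (- b * (\<mu> p - lam_min H)))) * adj U)"
proof -
  obtain U \<mu> where U: "unitary_mat d U" and H: "H = U * sdiag d (\<lambda>k. complex_of_real (\<mu> k)) * adj U"
    using spectral[OF hH] by blast
  have Uc: "U \<in> carrier_mat d d" using U unfolding unitary_mat_def by auto
  have Hc: "H \<in> carrier_mat d d" using hH unfolding hermitian_mat_def by auto
  define l where "l = lam_min H"
  have F: "F_op b H = U * sdiag d (\<lambda>p. complex_of_real (exp (- b * (\<mu> p - l)))) * adj U" for b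
  proof -
    have eq: "(- complex_of_real b) \<cdot>\<^sub>m (H - complex_of_real l \<cdot>\<^sub>m 1\<^sub>m (dim_row H))
        = U * sdiag d (\<lambda>p. complex_of_real (- b * (\<mu> p - l))) * adj U"
    proof (rule eq_matI)
      fix i j assume "i < dim_row (U * sdiag d (\<lambda>p. complex_of_real (- b * (\<mu> p - l))) * adj U)"
        "j < dim_col (U * sdiag d (\<lambda>p. complex_of_real (- b * (\<mu> p - l))) * adj U)"
      hence i: "i < d" and j: "j < d" using Uc by auto
      have Hij: "H $$ (i,j) = (\<Sum>p<d. U $$ (i,p) * complex_of_real (\<mu> p) * cnj (U $$ (j,p)))"
        unfolding H by (rule UDU_index[OF Uc i j])
      have "1\<^sub>m d $$ (i,j) = (U * adj U) $$ (i,j)" using unitary_right[OF U] by simp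
      also have "\<dots> = (\<Sum>p<d. U $$ (i,p) * cnj (U $$ (j,p)))"
        using Uc i j by (auto simp: scalar_prod_def atLeast0LessThan intro!: sum.cong)
      finally have Iij: "1\<^sub>m d $$ (i,j) = (\<Sum>p<d. U $$ (i,p) * cnj (U $$ (j,p)))" .
      have "((- complex_of_real b) \<cdot>\<^sub>m (H - complex_of_real l \<cdot>\<^sub>m 1\<^sub>m (dim_row H))) $$ (i,j)
          = - complex_of_real b * (H $$ (i,j) - complex_of_real l * 1\<^sub>m d $$ (i,j))"
        using Hc i j by simp
      also have "\<dots> = (\<Sum>p<d. U $$ (i,p) * complex_of_real (- b * (\<mu> p - l)) * cnj (U $$ (j,p)))"
        unfolding Hij Iij by (simp add: sum_distrib_left sum_subtractf[symmetric] algebra_simps)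
      also have "\<dots> = (U * sdiag d (\<lambda>p. complex_of_real (- b * (\<mu> p - l))) * adj U) $$ (i,j)"
        by (rule UDU_index[OF Uc i j, symmetric])
      finally show "((- complex_of_real b) \<cdot>\<^sub>m (H - complex_of_real l \<cdot>\<^sub>m 1\<^sub>m (dim_row H))) $$ (i,j)
          = (U * sdiag d (\<lambda>p. complex_of_real (- b * (\<mu> p - l))) * adj U) $$ (i,j)" .
    qed (use Hc Uc in auto)
    show ?thesis unfolding F_op_def l_def[symmetric] eq mat_exp_UDU[OF U] by (simp only: exp_of_real)
  qed
  show ?thesis using U lam_min_char[OF U H d] F unfolding l_def by blast
qed

lemma F_carrier: "hermitian_mat d H \<Longrightarrow> F_op b H \<in> carrier_mat d d"
  unfolding F_op_def mat_exp_def hermitian_mat_def by auto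

lemma F_dims[simp]: "hermitian_mat d H \<Longrightarrow> dim_row (F_op b H) = d"
  "hermitian_mat d H \<Longrightarrow> dim_col (F_op b H) = d"
  unfolding F_op_def mat_exp_def hermitian_mat_def by auto

lemma F_vec_carrier: "hermitian_mat d H \<Longrightarrow> F_op b H *\<^sub>v x \<in> carrier_vec d"
  unfolding carrier_vec_def F_op_def mat_exp_def hermitian_mat_def by auto

lemma F_zero:
  assumes "hermitian_mat d H" "0 < d"
  shows "F_op 0 H = 1\<^sub>m d"
proof -
  obtain U \<mu> where U: "unitary_mat d U"
    and F: "\<And>b. F_op b H = U * sdiag d (\<lambda>p. complex_of_real (exp (- b * (\<mu> p - lam_min H)))) * adj U"
    using F_op_spec[OF assms] by blast
  show ?thesis unfolding F using unitary_right[OF U] unitary_carrier[OF U] by (simp add: sdiag_one)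
qed

lemma F_add:
  assumes "hermitian_mat d H" "0 < d"
  shows "F_op a H * F_op b H = F_op (a + b) H"
proof -
  obtain U \<mu> where U: "unitary_mat d U"
    and F: "\<And>b. F_op b H = U * sdiag d (\<lambda>p. complex_of_real (exp (- b * (\<mu> p - lam_min H)))) * adj U"
    using F_op_spec[OF assms] by blast
  have e: "complex_of_real (exp (- a * (\<mu> p - lam_min H))) * complex_of_real (exp (- b * (\<mu> p - lam_min H)))
      = complex_of_real (exp (- (a + b) * (\<mu> p - lam_min H)))" for p
    by (simp only: of_real_mult[symmetric] exp_add[symmetric]) (simp add: algebra_simps)
  show ?thesis unfolding F UDU_mult[OF U] e ..
qed

lemma F_vec_add:
  assumes "hermitian_mat d H" "0 < d" "x \<in> carrier_vec d"
  shows "F_op a H *\<^sub>v (F_op b H *\<^sub>v x) = F_op (a + b) H *\<^sub>v x"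
proof -
  have "F_op a H *\<^sub>v (F_op b H *\<^sub>v x) = (F_op a H * F_op b H) *\<^sub>v x"
    by (rule assoc_mult_mat_vec[symmetric, OF F_carrier[OF assms(1)] F_carrier[OF assms(1)] assms(3)])
  thus ?thesis unfolding F_add[OF assms(1,2)] .
qed

lemma F_contr:
  assumes "hermitian_mat d H" "0 < d" "0 \<le> b" "x \<in> carrier_vec d"
  shows "cvnorm (F_op b H *\<^sub>v x) \<le> cvnorm x"
proof -
  obtain U \<mu> where U: "unitary_mat d U" and le: "\<forall>p<d. lam_min H \<le> \<mu> p"
    and F: "\<And>b. F_op b H = U * sdiag d (\<lambda>p. complex_of_real (exp (- b * (\<mu> p - lam_min H)))) * adj U"
    using F_op_spec[OF assms(1,2)] by blast
  have Uc: "U \<in> carrier_mat d d" by (rule unitary_carrier[OF U])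
  have aUc: "adj U \<in> carrier_mat d d" using Uc by auto
  define E where "E = sdiag d (\<lambda>p. complex_of_real (exp (- b * (\<mu> p - lam_min H))))"
  have Ec: "E \<in> carrier_mat d d" unfolding E_def by simp
  have UEc: "U * E \<in> carrier_mat d d" using Uc Ec by auto
  have y: "adj U *\<^sub>v x \<in> carrier_vec d" using aUc assms(4) by auto
  have "F_op b H *\<^sub>v x = (U * E) *\<^sub>v (adj U *\<^sub>v x)"
    unfolding F E_def[symmetric] by (rule assoc_mult_mat_vec[OF UEc aUc assms(4)])
  also have "\<dots> = U *\<^sub>v (E *\<^sub>v (adj U *\<^sub>v x))" by (rule assoc_mult_mat_vec[OF Uc Ec y])
  finally have "F_op b H *\<^sub>v x = U *\<^sub>v (E *\<^sub>v (adj U *\<^sub>v x))" .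
  hence "cvnorm (F_op b H *\<^sub>v x) = cvnorm (E *\<^sub>v (adj U *\<^sub>v x))"
  proof -
    have "E *\<^sub>v (adj U *\<^sub>v x) \<in> carrier_vec d" unfolding E_def by simp
    thus ?thesis using unitary_norm[OF U, of "E *\<^sub>v (adj U *\<^sub>v x)"] \<open>F_op b H *\<^sub>v x = U *\<^sub>v (E *\<^sub>v (adj U *\<^sub>v x))\<close> by simp
  qed
  also have "\<dots> \<le> 1 * cvnorm (adj U *\<^sub>v x)" unfolding E_def
  proof (rule sdiag_norm_le)
    show "adj U *\<^sub>v x \<in> carrier_vec d" by (rule y)
    fix p assume "p < d"
    hence "- b * (\<mu> p - lam_min H) \<le> 0" using le assms(3) by (simp add: mult_nonneg_nonneg)
    thus "cmod (complex_of_real (exp (- b * (\<mu> p - lam_min H)))) \<le> 1" by simp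
  qed simp
  also have "\<dots> = cvnorm x" using unitary_norm[OF unitary_adj[OF U] assms(4)] by simp
  finally show ?thesis .
qed

lemma F_fix:
  assumes "hermitian_mat d H" "0 < d"
  shows "\<exists>v0. v0 \<in> carrier_vec d \<and> cvnorm v0 = 1 \<and> (\<forall>b. F_op b H *\<^sub>v v0 = v0)"
proof -
  obtain U \<mu> p0 where U: "unitary_mat d U" and p0: "p0 < d" "\<mu> p0 = lam_min H"
    and F: "\<And>b. F_op b H = U * sdiag d (\<lambda>p. complex_of_real (exp (- b * (\<mu> p - lam_min H)))) * adj U"
    using F_op_spec[OF assms] by blast
  have Uc: "U \<in> carrier_mat d d" by (rule unitary_carrier[OF U])
  define v0 where "v0 = col U p0"
  have "F_op b H *\<^sub>v v0 = v0" for b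
  proof -
    have "F_op b H *\<^sub>v v0 = col (F_op b H * U) p0"
      unfolding v0_def by (rule col_mult2[symmetric, OF F_carrier[OF assms(1)] Uc p0(1)])
    also have "\<dots> = v0" unfolding F UDU_mult_U[OF U] col_U_sdiag[OF Uc p0(1)] p0(2) v0_def by simp
    finally show ?thesis .
  qed
  moreover have "v0 \<in> carrier_vec d" unfolding v0_def using Uc by auto
  moreover have "cvnorm v0 = 1" unfolding v0_def by (rule col_unitary_norm[OF U p0(1)])
  ultimately show ?thesis by blast
qed

lemma p_psi_sqrt: "cvnorm (F_op b H *\<^sub>v \<Psi>) = sqrt (p_psi H \<Psi> b)"
  unfolding p_psi_def by simp

lemma p_zero:
  assumes "hermitian_mat d H" "0 < d" "\<Psi> \<in> carrier_vec d" "cvnorm \<Psi> = 1"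
  shows "p_psi H \<Psi> 0 = 1"
  unfolding p_psi_def F_zero[OF assms(1,2)] using assms(3,4) by simp

lemma mat_vec_zero: "A \<in> carrier_mat n k \<Longrightarrow> A *\<^sub>v 0\<^sub>v k = 0\<^sub>v n"
  by (intro eq_vecI) (auto simp: scalar_prod_def)

lemma p_pos:
  assumes "hermitian_mat d H" "0 < d" "\<Psi> \<in> carrier_vec d" "cvnorm \<Psi> = 1"
  shows "0 < p_psi H \<Psi> b"
proof -
  have inv: "F_op (- b) H *\<^sub>v (F_op b H *\<^sub>v \<Psi>) = \<Psi>"
    using F_vec_add[OF assms(1-3)] F_zero[OF assms(1,2)] assms(3) by simp
  have "F_op b H *\<^sub>v \<Psi> \<noteq> 0\<^sub>v d"
  proof
    assume "F_op b H *\<^sub>v \<Psi> = 0\<^sub>v d"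
    hence "\<Psi> = F_op (-b) H *\<^sub>v 0\<^sub>v d" using inv by simp
    also have "\<dots> = 0\<^sub>v d" by (rule mat_vec_zero[OF F_carrier[OF assms(1)]])
    finally have "\<Psi> = 0\<^sub>v d" .
    thus False using assms(4) by simp
  qed
  moreover have "dim_vec (F_op b H *\<^sub>v \<Psi>) = d" using F_dims[OF assms(1)] by simp
  ultimately have "cvnorm (F_op b H *\<^sub>v \<Psi>) \<noteq> 0" using cvnorm_zero_iff[of "F_op b H *\<^sub>v \<Psi>"] by simp
  hence "cvnorm (F_op b H *\<^sub>v \<Psi>) > 0" using cvnorm_nonneg[of "F_op b H *\<^sub>v \<Psi>"] by linarith
  thus ?thesis unfolding p_psi_def by simp
qed

lemma p_mono:
  assumes "hermitian_mat d H" "0 < d" "\<Psi> \<in> carrier_vec d" "0 \<le> a" "a \<le> b"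
  shows "p_psi H \<Psi> b \<le> p_psi H \<Psi> a"
proof -
  have "F_op b H *\<^sub>v \<Psi> = F_op (b - a) H *\<^sub>v (F_op a H *\<^sub>v \<Psi>)"
    using F_vec_add[OF assms(1-3), of "b - a" a] by simp
  hence "cvnorm (F_op b H *\<^sub>v \<Psi>) \<le> cvnorm (F_op a H *\<^sub>v \<Psi>)"
    using F_contr[OF assms(1,2), of "b - a" "F_op a H *\<^sub>v \<Psi>"] assms F_vec_carrier[OF assms(1)] by simp
  thus ?thesis unfolding p_psi_def by (intro power_mono) auto
qed

lemma p_le1:
  assumes "hermitian_mat d H" "0 < d" "\<Psi> \<in> carrier_vec d" "cvnorm \<Psi> = 1" "0 \<le> b"
  shows "p_psi H \<Psi> b \<le> 1"
  using p_mono[OF assms(1-3), of 0 b] p_zero[OF assms(1-4)] assms(5) by simp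

lemma smult_mat_vec: "A \<in> carrier_mat n k \<Longrightarrow> v \<in> carrier_vec k \<Longrightarrow> (a \<cdot>\<^sub>m A) *\<^sub>v v = a \<cdot>\<^sub>v (A *\<^sub>v v)"
  by (intro eq_vecI) (auto simp: scalar_prod_def sum_distrib_left mult.assoc)

lemma cmod_le_cvnorm: "j < dim_vec v \<Longrightarrow> cmod (v $ j) \<le> cvnorm v"
  unfolding cvnorm_L2 by (rule member_le_L2_set) auto

lemma cvnorm_le_l1: "cvnorm v \<le> (\<Sum>i<dim_vec v. cmod (v $ i))"
  unfolding cvnorm_L2 by (rule L2_set_le_sum) auto

lemma mat_vec_bound:
  assumes A: "A \<in> carrier_mat n k" and v: "v \<in> carrier_vec k"
  shows "cvnorm (A *\<^sub>v v) \<le> (\<Sum>i<n. \<Sum>j<k. cmod (A $$ (i,j))) * cvnorm v"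
proof -
  have "cvnorm (A *\<^sub>v v) \<le> (\<Sum>i<n. cmod ((A *\<^sub>v v) $ i))"
    using cvnorm_le_l1[of "A *\<^sub>v v"] A by simp
  also have "\<dots> \<le> (\<Sum>i<n. (\<Sum>j<k. cmod (A $$ (i,j))) * cvnorm v)"
  proof (rule sum_mono)
    fix i assume "i \<in> {..<n}"
    hence i: "i < n" by simp
    have "cmod ((A *\<^sub>v v) $ i) = cmod (\<Sum>j<k. A $$ (i,j) * v $ j)"
      using A v i by (simp add: scalar_prod_def atLeast0LessThan)
    also have "\<dots> \<le> (\<Sum>j<k. cmod (A $$ (i,j)) * cmod (v $ j))"
      by (rule order_trans[OF norm_sum]) (simp add: norm_mult)
    also have "\<dots> \<le> (\<Sum>j<k. cmod (A $$ (i,j)) * cvnorm v)"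
      using v by (intro sum_mono mult_left_mono cmod_le_cvnorm) auto
    finally show "cmod ((A *\<^sub>v v) $ i) \<le> (\<Sum>j<k. cmod (A $$ (i,j))) * cvnorm v"
      by (simp add: sum_distrib_right)
  qed
  also have "\<dots> = (\<Sum>i<n. \<Sum>j<k. cmod (A $$ (i,j))) * cvnorm v"
    by (simp add: sum_distrib_right)
  finally show ?thesis .
qed

lemma op_norm_bound:
  assumes A: "A \<in> carrier_mat n n" and x: "x \<in> carrier_vec n"
  shows "cvnorm (A *\<^sub>v x) \<le> op_norm A * cvnorm x"
proof (cases "cvnorm x = 0")
  case True
  hence "x = 0\<^sub>v n" using cvnorm_zero_iff[of x] x by simp
  hence "A *\<^sub>v x = 0\<^sub>v n" using A by (intro eq_vecI) (auto simp: scalar_prod_def)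
  thus ?thesis using True by simp
next
  case False
  hence xp: "cvnorm x > 0" using cvnorm_nonneg[of x] by linarith
  define y where "y = complex_of_real (1 / cvnorm x) \<cdot>\<^sub>v x"
  have yc: "y \<in> carrier_vec (dim_col A)" using A x unfolding y_def by auto
  have yn: "cvnorm y = 1" unfolding y_def cvnorm_smult using xp by (simp add: norm_divide)
  define S where "S = {cvnorm (A *\<^sub>v v) | v. v \<in> carrier_vec (dim_col A) \<and> cvnorm v = 1}"
  have bdd: "bdd_above S"
  proof (rule bdd_aboveI)
    fix s assume "s \<in> S"
    then obtain v where v: "v \<in> carrier_vec (dim_col A)" "cvnorm v = 1" and s: "s = cvnorm (A *\<^sub>v v)"
      unfolding S_def by blast
    show "s \<le> (\<Sum>i<n. \<Sum>j<n. cmod (A $$ (i,j)))"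
      using mat_vec_bound[OF A, of v] v A s by simp
  qed
  have "cvnorm (A *\<^sub>v y) \<le> op_norm A"
    unfolding op_norm_def S_def[symmetric] using yc yn bdd by (intro cSup_upper) (auto simp: S_def)
  moreover have "A *\<^sub>v x = complex_of_real (cvnorm x) \<cdot>\<^sub>v (A *\<^sub>v y)"
  proof -
    have "x = complex_of_real (cvnorm x) \<cdot>\<^sub>v y" unfolding y_def using xp
      by (intro eq_vecI) auto
    hence "A *\<^sub>v x = A *\<^sub>v (complex_of_real (cvnorm x) \<cdot>\<^sub>v y)" by simp
    also have "\<dots> = complex_of_real (cvnorm x) \<cdot>\<^sub>v (A *\<^sub>v y)" using A yc by (intro mult_mat_vec) auto
    finally show ?thesis .
  qed
  ultimately have "cvnorm (A *\<^sub>v x) = cvnorm x * cvnorm (A *\<^sub>v y)" "cvnorm (A *\<^sub>v y) \<le> op_norm A"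
    using xp by (simp_all add: cvnorm_smult)
  thus ?thesis using xp by (simp add: mult.commute mult_right_mono)
qed

lemma sum_stride:
  fixes g :: "nat \<Rightarrow> 'a::comm_monoid_add"
  assumes m: "0 < m" and z: "\<And>l. l < d * m \<Longrightarrow> l mod m \<noteq> 0 \<Longrightarrow> g l = 0"
  shows "(\<Sum>l<d * m. g l) = (\<Sum>j<d. g (j * m))"
proof -
  have inj: "inj_on (\<lambda>j. j * m) {..<d}" using m by (auto simp: inj_on_def)
  have sub: "(\<lambda>j. j * m) ` {..<d} \<subseteq> {..<d * m}"
  proof
    fix x assume "x \<in> (\<lambda>j. j * m) ` {..<d}"
    then obtain j where "j < d" "x = j * m" by auto
    thus "x \<in> {..<d * m}" using m by (auto intro: mult_strict_right_mono)
  qed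
  have "(\<Sum>l<d * m. g l) = (\<Sum>l\<in>(\<lambda>j. j * m) ` {..<d}. g l)"
  proof (rule sum.mono_neutral_right[OF _ sub])
    show "\<forall>i\<in>{..<d * m} - (\<lambda>j. j * m) ` {..<d}. g i = 0"
    proof
      fix l assume l: "l \<in> {..<d * m} - (\<lambda>j. j * m) ` {..<d}"
      have "l mod m \<noteq> 0"
      proof
        assume "l mod m = 0"
        then obtain j where j: "l = j * m" by (metis mult.commute mod_eq_0_iff_dvd dvd_def)
        hence "j < d" using l m by auto
        thus False using l j by auto
      qed
      thus "g l = 0" using z l by auto
    qed
  qed simp
  also have "\<dots> = (\<Sum>j<d. g (j * m))" by (rule sum.reindex[OF inj, unfolded comp_def])
  finally show ?thesis .
qed

lemma block_contr:
  assumes m: "0 < m" and U: "unitary_mat (d * m) U" and x: "x \<in> carrier_vec d"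
  shows "cvnorm (anc0_block d m U *\<^sub>v x) \<le> cvnorm x"
proof -
  define x' where "x' = vec (d * m) (\<lambda>l. if l mod m = 0 then x $ (l div m) else 0)"
  have x'c: "x' \<in> carrier_vec (d * m)" unfolding x'_def by simp
  have Uc: "U \<in> carrier_mat (d * m) (d * m)" using U unfolding unitary_mat_def by auto
  have jm: "j * m < d * m" if "j < d" for j using that m by (auto intro: mult_strict_right_mono)
  have "(cvnorm x')\<^sup>2 = (\<Sum>l<d * m. (cmod (x' $ l))\<^sup>2)" unfolding cvnorm_sq x'_def by simp
  also have "\<dots> = (\<Sum>j<d. (cmod (x' $ (j * m)))\<^sup>2)"
    by (rule sum_stride[OF m]) (auto simp: x'_def)
  also have "\<dots> = (cvnorm x)\<^sup>2" unfolding cvnorm_sq using x m jm by (auto simp: x'_def intro!: sum.cong)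
  finally have nx': "(cvnorm x')\<^sup>2 = (cvnorm x)\<^sup>2" .
  have Mx: "(anc0_block d m U *\<^sub>v x) $ i = (U *\<^sub>v x') $ (i * m)" if i: "i < d" for i
  proof -
    have "(U *\<^sub>v x') $ (i * m) = (\<Sum>l<d * m. U $$ (i * m, l) * x' $ l)"
      using Uc x'c jm[OF i] by (simp add: scalar_prod_def atLeast0LessThan)
    also have "\<dots> = (\<Sum>j<d. U $$ (i * m, j * m) * x' $ (j * m))"
      by (rule sum_stride[OF m]) (auto simp: x'_def)
    also have "\<dots> = (\<Sum>j<d. anc0_block d m U $$ (i, j) * x $ j)"
      using i m jm by (auto simp: x'_def anc0_block_def intro!: sum.cong)
    also have "\<dots> = (anc0_block d m U *\<^sub>v x) $ i"
      using i x by (simp add: anc0_block_def scalar_prod_def atLeast0LessThan)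
    finally show ?thesis by simp
  qed
  have "(cvnorm (anc0_block d m U *\<^sub>v x))\<^sup>2 = (\<Sum>i<d. (cmod ((U *\<^sub>v x') $ (i * m)))\<^sup>2)"
    unfolding cvnorm_sq by (simp add: anc0_block_def Mx[symmetric])
  also have "\<dots> = (\<Sum>l\<in>(\<lambda>j. j * m) ` {..<d}. (cmod ((U *\<^sub>v x') $ l))\<^sup>2)"
    using m by (subst sum.reindex) (auto simp: inj_on_def)
  also have "\<dots> \<le> (\<Sum>l<d * m. (cmod ((U *\<^sub>v x') $ l))\<^sup>2)"
    by (rule sum_mono2) (use jm in auto)
  also have "\<dots> = (cvnorm (U *\<^sub>v x'))\<^sup>2" unfolding cvnorm_sq using Uc by simp
  also have "\<dots> = (cvnorm x)\<^sup>2" using unitary_norm[OF U x'c] nx' by simp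
  finally show ?thesis by (rule power2_le_imp_le) simp
qed

lemma normalize_smult:
  assumes "0 < r"
  shows "normalize_vec (complex_of_real r \<cdot>\<^sub>v z) = normalize_vec z"
  unfolding normalize_vec_def cvnorm_smult using assms
  by (intro eq_vecI) auto

lemma cnorm_diff_sq: "(cmod (x - y))\<^sup>2 = (cmod x)\<^sup>2 + (cmod y)\<^sup>2 - 2 * Re (cnj x * y)"
  by (simp add: cmod_power2 power2_diff algebra_simps)

lemma cvnorm_diff_sq:
  assumes "dim_vec a = dim_vec b"
  shows "(cvnorm (a - b))\<^sup>2 = (cvnorm a)\<^sup>2 + (cvnorm b)\<^sup>2 - 2 * Re (cinner a b)"
  unfolding cvnorm_sq cinner_def using assms
  by (simp add: cnorm_diff_sq sum_subtractf sum.distrib sum_distrib_left Re_sum)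

lemma cinner_cs: "dim_vec a = dim_vec b \<Longrightarrow> cmod (cinner a b) \<le> cvnorm a * cvnorm b"
proof -
  assume ab: "dim_vec a = dim_vec b"
  have "cmod (cinner a b) \<le> (\<Sum>i<dim_vec a. cmod (a $ i) * cmod (b $ i))"
    unfolding cinner_def by (rule order_trans[OF norm_sum]) (simp add: norm_mult)
  also have "\<dots> \<le> cvnorm a * cvnorm b"
    unfolding cvnorm_L2 using ab L2_set_mult_ineq[of "\<lambda>i. cmod (a $ i)" "\<lambda>i. cmod (b $ i)" "{..<dim_vec a}"]
    by simp
  finally show ?thesis .
qed

lemma trace_dist_le:
  assumes "dim_vec a = dim_vec b" "cvnorm a = 1" "cvnorm b = 1"
  shows "trace_dist_pure a b \<le> cvnorm (a - b)"
proof -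
  define c where "c = cinner a b"
  have "(cvnorm (a - b))\<^sup>2 = 2 - 2 * Re c" unfolding c_def using cvnorm_diff_sq[OF assms(1)] assms by simp
  moreover have "Re c \<le> cmod c" by (rule complex_Re_le_cmod)
  moreover have "0 \<le> (1 - cmod c)\<^sup>2" by simp
  ultimately have "1 - (cmod c)\<^sup>2 \<le> (cvnorm (a - b))\<^sup>2" by (simp add: power2_diff)
  hence "sqrt (1 - (cmod c)\<^sup>2) \<le> sqrt ((cvnorm (a - b))\<^sup>2)" by (rule real_sqrt_le_mono)
  thus ?thesis unfolding trace_dist_pure_def c_def by simp
qed

lemma geom_sum:
  assumes "0 < a" "a \<le> (1::real)"
  shows "(\<Sum>t. (1 - a) ^ t * c) = c / a"
proof -
  have "norm (1 - a) < 1" using assms by simp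
  from sums_mult2[OF geometric_sums[OF this], of c]
  have "(\<lambda>t. (1 - a) ^ t * c) sums (c / a)" by simp
  thus ?thesis by (rule sums_unique[symmetric])
qed

lemma prod_split_at:
  fixes f :: "nat \<Rightarrow> real"
  assumes "k \<le> n"
  shows "(\<Prod>i=1..n. f i) = (\<Prod>i=1..k. f i) * (\<Prod>i=Suc k..n. f i)"
proof -
  have "{1..n} = {1..k} \<union> {Suc k..n}" using assms by auto
  moreover have "{1..k} \<inter> {Suc k..n} = {}" by auto
  ultimately show ?thesis by (simp add: prod.union_disjoint)
qed

locale frag =
  fixes d :: nat and H :: "complex mat" and \<Psi> :: "complex vec" and \<beta> \<epsilon> :: real and r :: nat
    and \<Delta>\<beta> \<alpha> \<epsilon>' :: "nat \<Rightarrow> real" and m :: "nat \<Rightarrow> nat" and U :: "nat \<Rightarrow> complex mat"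
  assumes d: "0 < d" and hH: "hermitian_mat d H" and \<Psi>c: "\<Psi> \<in> carrier_vec d" and \<Psi>n: "cvnorm \<Psi> = 1"
    and eps0: "0 \<le> \<epsilon>" and eps1: "\<epsilon> \<le> 1/100"
    and \<Delta>pos: "\<forall>l\<in>{1..r}. 0 < \<Delta>\<beta> l" and \<beta>sum: "(\<Sum>l=1..r. \<Delta>\<beta> l) = \<beta>"
    and prim: "\<forall>l\<in>{1..r}. 0 < \<alpha> l \<and> qite_primitive d H (\<Delta>\<beta> l) (\<epsilon>' l) (\<alpha> l) (m l) (U l)"
    and e1: "1 \<le> r \<longrightarrow> \<epsilon>' 1 \<le> \<epsilon> * (\<Prod>k=1..r. \<alpha> k) / (2 * 4 ^ (r - 1)) * sqrt (p_psi H \<Psi> \<beta>)"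
    and e2: "\<forall>l\<in>{2..r}. \<epsilon>' l \<le> \<epsilon> * (\<Prod>k=l..r. \<alpha> k) / 4 ^ (r - l + 1) *
          sqrt (p_psi H \<Psi> \<beta> / p_psi H \<Psi> (\<Sum>k=1..l-1. \<Delta>\<beta> k))"
begin

definition M where "M = (\<lambda>l. anc0_block d (m l) (U l))"
definition bt where "bt l = (\<Sum>k=1..l. \<Delta>\<beta> k)"
abbreviation pp where "pp b \<equiv> p_psi H \<Psi> b"
primrec vv where "vv 0 = \<Psi>" | "vv (Suc l) = M (Suc l) *\<^sub>v vv l"
definition Pa where "Pa l = (\<Prod>k=1..l. \<alpha> k)"
definition w where "w l = complex_of_real (Pa l) \<cdot>\<^sub>v (F_op (bt l) H *\<^sub>v \<Psi>)"

lemma M_carrier: "M l \<in> carrier_mat d d" unfolding M_def anc0_block_def by auto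

lemma M_dims[simp]: "dim_row (M l) = d" "dim_col (M l) = d" unfolding M_def anc0_block_def by auto

lemma vv_carrier: "vv l \<in> carrier_vec d"
  by (induction l) (auto simp: \<Psi>c M_carrier intro: mult_mat_vec_carrier[OF M_carrier])

lemma Fv_carrier: "F_op b H *\<^sub>v x \<in> carrier_vec d" by (rule F_vec_carrier[OF hH])

lemma w_carrier: "w l \<in> carrier_vec d" unfolding w_def using Fv_carrier by simp

lemma prim_l:
  assumes "l \<in> {1..r}"
  shows "0 < \<alpha> l" "0 < m l" "unitary_mat (d * m l) (U l)"
    "op_norm (complex_of_real (\<alpha> l) \<cdot>\<^sub>m F_op (\<Delta>\<beta> l) H - M l) \<le> \<epsilon>' l"
  using prim assms unfolding qite_primitive_def block_encoding_def M_def by auto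

lemma M_contr: "l \<in> {1..r} \<Longrightarrow> x \<in> carrier_vec d \<Longrightarrow> cvnorm (M l *\<^sub>v x) \<le> cvnorm x"
  unfolding M_def using block_contr prim_l by blast

lemma M_err:
  assumes l: "l \<in> {1..r}" and y: "y \<in> carrier_vec d"
  shows "cvnorm (M l *\<^sub>v y - complex_of_real (\<alpha> l) \<cdot>\<^sub>v (F_op (\<Delta>\<beta> l) H *\<^sub>v y)) \<le> \<epsilon>' l * cvnorm y"
proof -
  define A where "A = complex_of_real (\<alpha> l) \<cdot>\<^sub>m F_op (\<Delta>\<beta> l) H - M l"
  have Fc: "F_op (\<Delta>\<beta> l) H \<in> carrier_mat d d" by (rule F_carrier[OF hH])
  have Ac: "A \<in> carrier_mat d d" unfolding A_def using Fc M_carrier[of l] by auto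
  have "A *\<^sub>v y = (complex_of_real (\<alpha> l) \<cdot>\<^sub>m F_op (\<Delta>\<beta> l) H) *\<^sub>v y - M l *\<^sub>v y"
    unfolding A_def using Fc M_carrier y by (intro minus_mult_distrib_mat_vec) auto
  also have "\<dots> = complex_of_real (\<alpha> l) \<cdot>\<^sub>v (F_op (\<Delta>\<beta> l) H *\<^sub>v y) - M l *\<^sub>v y"
    using smult_mat_vec[OF Fc y] by simp
  finally have Ay: "A *\<^sub>v y = complex_of_real (\<alpha> l) \<cdot>\<^sub>v (F_op (\<Delta>\<beta> l) H *\<^sub>v y) - M l *\<^sub>v y" .
  have "cvnorm (M l *\<^sub>v y - complex_of_real (\<alpha> l) \<cdot>\<^sub>v (F_op (\<Delta>\<beta> l) H *\<^sub>v y)) = cvnorm (A *\<^sub>v y)"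
    unfolding Ay using M_carrier Fc by (intro cvnorm_diff_sym) auto
  also have "\<dots> \<le> op_norm A * cvnorm y" by (rule op_norm_bound[OF Ac y])
  also have "\<dots> \<le> \<epsilon>' l * cvnorm y" unfolding A_def using prim_l(4)[OF l] by (intro mult_right_mono) auto
  finally show ?thesis .
qed

lemma alpha_le: assumes l: "l \<in> {1..r}" shows "\<alpha> l \<le> 1 + \<epsilon>' l"
proof -
  obtain v0 where v0: "v0 \<in> carrier_vec d" "cvnorm v0 = 1" and fix0: "\<And>b. F_op b H *\<^sub>v v0 = v0"
    using F_fix[OF hH d] by blast
  have err: "cvnorm (M l *\<^sub>v v0 - complex_of_real (\<alpha> l) \<cdot>\<^sub>v v0) \<le> \<epsilon>' l"
    using M_err[OF l v0(1)] fix0 v0 by simp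
  have "\<alpha> l = cvnorm (complex_of_real (\<alpha> l) \<cdot>\<^sub>v v0)" using v0 prim_l(1)[OF l] by (simp add: cvnorm_smult)
  also have "\<dots> \<le> cvnorm (M l *\<^sub>v v0) + cvnorm (complex_of_real (\<alpha> l) \<cdot>\<^sub>v v0 - M l *\<^sub>v v0)"
    using M_carrier v0 by (intro cvnorm_diff_le) auto
  also have "cvnorm (complex_of_real (\<alpha> l) \<cdot>\<^sub>v v0 - M l *\<^sub>v v0) = cvnorm (M l *\<^sub>v v0 - complex_of_real (\<alpha> l) \<cdot>\<^sub>v v0)"
    using M_carrier v0 by (intro cvnorm_diff_sym) auto
  finally show ?thesis using err M_contr[OF l v0(1)] v0 by simp
qed

lemma bt_0[simp]: "bt 0 = 0" unfolding bt_def by simp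

lemma bt_Suc: "bt (Suc l) = bt l + \<Delta>\<beta> (Suc l)"
  unfolding bt_def by (simp add: sum.nat_ivl_Suc')

lemma bt_r: "bt r = \<beta>" unfolding bt_def \<beta>sum ..

lemma bt_nonneg: "l \<le> r \<Longrightarrow> 0 \<le> bt l"
  unfolding bt_def using \<Delta>pos by (intro sum_nonneg) (auto simp: less_imp_le)

lemma bt_le: "l \<le> r \<Longrightarrow> bt l \<le> \<beta>"
  unfolding bt_r[symmetric] bt_def using \<Delta>pos by (intro sum_mono2) (auto simp: less_imp_le)

lemma beta_nonneg: "0 \<le> \<beta>" using bt_nonneg[of r] bt_r by simp

lemma pp_pos: "0 < pp b" by (rule p_pos[OF hH d \<Psi>c \<Psi>n])

lemma pp_mono: "l \<le> r \<Longrightarrow> pp \<beta> \<le> pp (bt l)"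
  using p_mono[OF hH d \<Psi>c, of "bt l" \<beta>] bt_nonneg bt_le by simp

lemma pp_bt0: "pp (bt 0) = 1" using p_zero[OF hH d \<Psi>c \<Psi>n] by simp

lemma pp_le1: "l \<le> r \<Longrightarrow> pp (bt l) \<le> 1" using p_le1[OF hH d \<Psi>c \<Psi>n] bt_nonneg by simp

lemma ppb_le1: "pp \<beta> \<le> 1" using p_le1[OF hH d \<Psi>c \<Psi>n beta_nonneg] .

lemma Pa_0[simp]: "Pa 0 = 1" unfolding Pa_def by simp

lemma Pa_Suc: "Pa (Suc l) = Pa l * \<alpha> (Suc l)" unfolding Pa_def by (simp add: prod.nat_ivl_Suc' mult.commute)

lemma Pa_pos: "l \<le> r \<Longrightarrow> 0 < Pa l"
  unfolding Pa_def using prim by (intro prod_pos) auto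

lemma w_norm: "l \<le> r \<Longrightarrow> cvnorm (w l) = Pa l * sqrt (pp (bt l))"
  unfolding w_def cvnorm_smult p_psi_sqrt using Pa_pos[of l] by simp

lemma w_norm_pos: "l \<le> r \<Longrightarrow> 0 < cvnorm (w l)"
  using w_norm Pa_pos pp_pos by simp

lemma w_Suc:
  assumes "Suc l \<le> r"
  shows "w (Suc l) = complex_of_real (\<alpha> (Suc l)) \<cdot>\<^sub>v (F_op (\<Delta>\<beta> (Suc l)) H *\<^sub>v w l)"
proof -
  have Fc: "F_op (\<Delta>\<beta> (Suc l)) H \<in> carrier_mat d d" by (rule F_carrier[OF hH])
  have "F_op (\<Delta>\<beta> (Suc l)) H *\<^sub>v w l = complex_of_real (Pa l) \<cdot>\<^sub>v (F_op (\<Delta>\<beta> (Suc l)) H *\<^sub>v (F_op (bt l) H *\<^sub>v \<Psi>))"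
    unfolding w_def using Fc Fv_carrier by (intro mult_mat_vec) auto
  also have "F_op (\<Delta>\<beta> (Suc l)) H *\<^sub>v (F_op (bt l) H *\<^sub>v \<Psi>) = F_op (bt (Suc l)) H *\<^sub>v \<Psi>"
    unfolding bt_Suc using F_vec_add[OF hH d \<Psi>c] by (simp add: add.commute)
  finally show ?thesis unfolding w_def Pa_Suc
    by (simp add: smult_smult_assoc mult.commute)
qed

lemma err_step:
  assumes "Suc l \<le> r"
  shows "cvnorm (vv (Suc l) - w (Suc l)) \<le> cvnorm (vv l - w l) + \<epsilon>' (Suc l) * cvnorm (w l)"
proof -
  have l: "Suc l \<in> {1..r}" using assms by auto
  define Fw where "Fw = complex_of_real (\<alpha> (Suc l)) \<cdot>\<^sub>v (F_op (\<Delta>\<beta> (Suc l)) H *\<^sub>v w l)"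
  have Fwc: "Fw \<in> carrier_vec d" unfolding Fw_def using Fv_carrier by simp
  have Mc: "M (Suc l) \<in> carrier_mat d d" by (rule M_carrier)
  have "vv (Suc l) - w (Suc l) = (M (Suc l) *\<^sub>v vv l - M (Suc l) *\<^sub>v w l) + (M (Suc l) *\<^sub>v w l - Fw)"
    unfolding w_Suc[OF assms] Fw_def[symmetric] vv.simps using Mc vv_carrier w_carrier Fwc
    by (intro eq_vecI) auto
  also have "M (Suc l) *\<^sub>v vv l - M (Suc l) *\<^sub>v w l = M (Suc l) *\<^sub>v (vv l - w l)"
    using Mc vv_carrier w_carrier by (intro mult_minus_distrib_mat_vec[symmetric]) auto
  finally have eq: "vv (Suc l) - w (Suc l) = M (Suc l) *\<^sub>v (vv l - w l) + (M (Suc l) *\<^sub>v w l - Fw)" .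
  have "cvnorm (vv (Suc l) - w (Suc l)) \<le> cvnorm (M (Suc l) *\<^sub>v (vv l - w l)) + cvnorm (M (Suc l) *\<^sub>v w l - Fw)"
    unfolding eq using Mc Fwc by (intro cvnorm_add_le) auto
  also have "\<dots> \<le> cvnorm (vv l - w l) + \<epsilon>' (Suc l) * cvnorm (w l)"
    using M_contr[OF l, of "vv l - w l"] M_err[OF l w_carrier] vv_carrier w_carrier unfolding Fw_def
    by (intro add_mono) auto
  finally show ?thesis .
qed

end

context frag
begin

lemma e2': "l \<in> {2..r} \<Longrightarrow> \<epsilon>' l \<le> \<epsilon> * (\<Prod>k=l..r. \<alpha> k) / 4 ^ (r - l + 1) * sqrt (pp \<beta> / pp (bt (l - 1)))"
  using e2 unfolding bt_def by auto

lemma sqrt_ratio_le1: "l \<le> r \<Longrightarrow> sqrt (pp \<beta> / pp (bt l)) \<le> 1"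
  using pp_mono[of l] pp_pos[of "bt l"] by simp

lemma sqrt_ppb_le1: "sqrt (pp \<beta>) \<le> 1" using ppb_le1 by simp

lemma alpha_step:
  assumes n: "n \<in> {1..r}" and IH: "\<And>j. n < j \<Longrightarrow> j \<le> r \<Longrightarrow> \<alpha> j \<le> 2"
  shows "\<alpha> n \<le> 2"
proof -
  have an: "0 < \<alpha> n" using prim_l(1)[OF n] .
  have Q: "(\<Prod>k=Suc n..r. \<alpha> k) \<le> 4 ^ (r - n)"
  proof (rule prod_le_power)
    fix k assume "k \<in> {Suc n..r}"
    hence "k \<in> {1..r}" "n < k" "k \<le> r" using n by auto
    thus "0 \<le> \<alpha> k \<and> \<alpha> k \<le> 4" using prim_l(1)[of k] IH[of k] by auto
  qed auto
  have Qnn: "0 \<le> (\<Prod>k=Suc n..r. \<alpha> k)" using prim by (intro prod_nonneg) (auto simp: less_imp_le)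
  have split: "(\<Prod>k=n..r. \<alpha> k) = \<alpha> n * (\<Prod>k=Suc n..r. \<alpha> k)"
    using n by (intro prod.atLeast_Suc_atMost) auto
  have ebound: "\<epsilon>' n \<le> \<epsilon> * \<alpha> n / 2"
  proof (cases "n = 1")
    case True
    have r1: "1 \<le> r" using n by auto
    have "\<epsilon>' n \<le> \<epsilon> * (\<Prod>k=n..r. \<alpha> k) / (2 * 4 ^ (r - n)) * sqrt (pp \<beta>)"
      unfolding True using e1 r1 by simp
    also have "\<dots> \<le> \<epsilon> * (\<Prod>k=n..r. \<alpha> k) / (2 * 4 ^ (r - n))"
      using sqrt_ppb_le1 eps0 Qnn an by (intro mult_left_le) (auto simp: split)
    also have "\<dots> \<le> \<epsilon> * (\<alpha> n * 4 ^ (r - n)) / (2 * 4 ^ (r - n))"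
    proof (intro divide_right_mono mult_left_mono)
      show "(\<Prod>k=n..r. \<alpha> k) \<le> \<alpha> n * 4 ^ (r - n)" unfolding split using Q an by (intro mult_left_mono) auto
    qed (use eps0 in auto)
    also have "\<dots> = \<epsilon> * \<alpha> n / 2" by simp
    finally show ?thesis .
  next
    case False
    hence n2: "n \<in> {2..r}" using n by auto
    have "\<epsilon>' n \<le> \<epsilon> * (\<Prod>k=n..r. \<alpha> k) / 4 ^ (r - n + 1) * sqrt (pp \<beta> / pp (bt (n - 1)))" by (rule e2'[OF n2])
    also have "\<dots> \<le> \<epsilon> * (\<Prod>k=n..r. \<alpha> k) / 4 ^ (r - n + 1)"
      using sqrt_ratio_le1[of "n - 1"] n eps0 Qnn an by (intro mult_left_le) (auto simp: split)
    also have "\<dots> \<le> \<epsilon> * (\<alpha> n * 4 ^ (r - n)) / 4 ^ (r - n + 1)"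
    proof (intro divide_right_mono mult_left_mono)
      show "(\<Prod>k=n..r. \<alpha> k) \<le> \<alpha> n * 4 ^ (r - n)" unfolding split using Q an by (intro mult_left_mono) auto
    qed (use eps0 in auto)
    also have "\<dots> = \<epsilon> * \<alpha> n / 4" by (simp add: power_add)
    also have "\<dots> \<le> \<epsilon> * \<alpha> n / 2" using eps0 an by (simp add: divide_left_mono mult_nonneg_nonneg)
    finally show ?thesis .
  qed
  have "\<alpha> n \<le> 1 + \<epsilon> * \<alpha> n / 2" using alpha_le[OF n] ebound by simp
  moreover have "\<epsilon> * \<alpha> n \<le> \<alpha> n" using eps1 an by (simp add: mult_left_le_one_le less_imp_le)
  ultimately show ?thesis by simp
qed

lemma alpha_le2: "l \<in> {1..r} \<Longrightarrow> \<alpha> l \<le> 2"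
proof -
  have "\<forall>j. k \<le> j \<and> j \<le> r \<and> 1 \<le> j \<longrightarrow> \<alpha> j \<le> 2" if "k \<le> Suc r" for k
    using that
  proof (induction k rule: inc_induct)
    case base
    then show ?case by auto
  next
    case (step n)
    show ?case
    proof (intro allI impI)
      fix j assume j: "n \<le> j \<and> j \<le> r \<and> 1 \<le> j"
      show "\<alpha> j \<le> 2"
      proof (cases "j = n")
        case True
        show ?thesis unfolding True
          by (rule alpha_step) (use j True step.IH in auto)
      next
        case False
        thus ?thesis using j step.IH by auto
      qed
    qed
  qed
  thus "l \<in> {1..r} \<Longrightarrow> \<alpha> l \<le> 2" by auto
qed

lemma prod_tail_le: "l \<le> r \<Longrightarrow> (\<Prod>k=Suc l..r. \<alpha> k) \<le> 4 ^ (r - l)"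
proof (rule prod_le_power)
  fix i assume "i \<in> {Suc l..r}"
  hence i: "i \<in> {1..r}" by auto
  show "0 \<le> \<alpha> i \<and> \<alpha> i \<le> 4" using prim_l(1)[OF i] alpha_le2[OF i] by auto
qed auto

lemma Pa_split: "l \<le> r \<Longrightarrow> Pa r = Pa l * (\<Prod>k=Suc l..r. \<alpha> k)"
  unfolding Pa_def by (rule prod_split_at)


lemma vv_dim[simp]: "dim_vec (vv l) = d" using vv_carrier[of l] by auto
lemma w_dim[simp]: "dim_vec (w l) = d" using w_carrier[of l] by auto

lemma sqrt_pp_pos: "0 < sqrt (pp b)" using pp_pos by simp

lemma T_bound:
  assumes l: "l \<in> {1..r}"
  shows "\<epsilon>' l * cvnorm (w (l - 1)) \<le> 2 * \<epsilon> * Pa r * sqrt (pp \<beta>) * 4 ^ (l - 1) / 4 ^ r"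
proof (cases "l = 1")
  case True
  have r1: "1 \<le> r" using l by auto
  have w0: "cvnorm (w 0) = 1" using w_norm[of 0] pp_bt0 by simp
  have "\<epsilon>' l * cvnorm (w (l - 1)) = \<epsilon>' 1" using True w0 by simp
  also have "\<dots> \<le> \<epsilon> * Pa r / (2 * 4 ^ (r - 1)) * sqrt (pp \<beta>)" using e1 r1 unfolding Pa_def by simp
  also have "\<dots> = 2 * \<epsilon> * Pa r * sqrt (pp \<beta>) * 4 ^ (l - 1) / 4 ^ r"
  proof -
    have "(4::real) ^ r = 4 * 4 ^ (r - 1)" using r1 by (cases r) auto
    thus ?thesis using True by simp
  qed
  finally show ?thesis .
next
  case False
  hence l2: "l \<in> {2..r}" using l by auto
  define P' where "P' = Pa (l - 1)"
  define s' where "s' = sqrt (pp (bt (l - 1)))"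
  have P'pos: "0 < P'" unfolding P'_def using Pa_pos l by auto
  have s'pos: "0 < s'" unfolding s'_def using sqrt_pp_pos .
  have wn: "cvnorm (w (l - 1)) = P' * s'" unfolding P'_def s'_def using w_norm l by auto
  have split: "Pa r = P' * (\<Prod>k=l..r. \<alpha> k)" unfolding P'_def using Pa_split[of "l - 1"] l by auto
  have sq: "sqrt (pp \<beta> / pp (bt (l - 1))) * s' = sqrt (pp \<beta>)"
    unfolding s'_def using pp_pos[of "bt (l - 1)"] by (simp add: real_sqrt_divide)
  have pw: "(4::real) ^ (r - l + 1) * 4 ^ (l - 1) = 4 ^ r"
  proof -
    have "r - l + 1 + (l - 1) = r" using l2 by auto
    thus ?thesis by (metis power_add)
  qed
  have "\<epsilon>' l * cvnorm (w (l - 1)) \<le> (\<epsilon> * (\<Prod>k=l..r. \<alpha> k) / 4 ^ (r - l + 1) * sqrt (pp \<beta> / pp (bt (l - 1)))) * (P' * s')"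
    unfolding wn using e2'[OF l2] P'pos s'pos by (intro mult_right_mono) auto
  also have "\<dots> = \<epsilon> * (P' * (\<Prod>k=l..r. \<alpha> k)) * (sqrt (pp \<beta> / pp (bt (l - 1))) * s') / 4 ^ (r - l + 1)"
    by (simp add: field_simps)
  also have "\<dots> = \<epsilon> * Pa r * sqrt (pp \<beta>) * 4 ^ (l - 1) / 4 ^ r"
    unfolding split[symmetric] sq pw[symmetric] by (simp add: field_simps)
  also have "\<dots> \<le> 2 * \<epsilon> * Pa r * sqrt (pp \<beta>) * 4 ^ (l - 1) / 4 ^ r"
  proof -
    have "0 \<le> \<epsilon> * Pa r * sqrt (pp \<beta>) * 4 ^ (l - 1) / 4 ^ r"
      using eps0 Pa_pos[of r] sqrt_pp_pos[of \<beta>] by (intro divide_nonneg_pos mult_nonneg_nonneg) auto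
    thus ?thesis by linarith
  qed
  finally show ?thesis .
qed

lemma w0: "w 0 = \<Psi>"
  unfolding w_def using F_zero[OF hH d] \<Psi>c by simp

lemma err_bound: "l \<le> r \<Longrightarrow> cvnorm (vv l - w l) \<le> 2 / 3 * \<epsilon> * Pa r * sqrt (pp \<beta>) * 4 ^ l / 4 ^ r"
proof (induction l)
  case 0
  have "vv 0 - w 0 = 0\<^sub>v d" unfolding w0 vv.simps using \<Psi>c by (intro eq_vecI) auto
  moreover have "0 \<le> 2 / 3 * \<epsilon> * Pa r * sqrt (pp \<beta>) * 4 ^ 0 / 4 ^ r"
    using eps0 Pa_pos[of r] sqrt_pp_pos[of \<beta>] by (intro divide_nonneg_pos mult_nonneg_nonneg) auto
  ultimately show ?case by simp
next
  case (Suc l)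
  have IH: "cvnorm (vv l - w l) \<le> 2 / 3 * \<epsilon> * Pa r * sqrt (pp \<beta>) * 4 ^ l / 4 ^ r" using Suc by simp
  have T: "\<epsilon>' (Suc l) * cvnorm (w l) \<le> 2 * \<epsilon> * Pa r * sqrt (pp \<beta>) * 4 ^ l / 4 ^ r"
    using T_bound[of "Suc l"] Suc.prems by simp
  have "cvnorm (vv (Suc l) - w (Suc l)) \<le> cvnorm (vv l - w l) + \<epsilon>' (Suc l) * cvnorm (w l)"
    by (rule err_step[OF Suc.prems])
  also have "\<dots> \<le> 2 / 3 * \<epsilon> * Pa r * sqrt (pp \<beta>) * 4 ^ l / 4 ^ r + 2 * \<epsilon> * Pa r * sqrt (pp \<beta>) * 4 ^ l / 4 ^ r"
    using IH T by linarith
  also have "\<dots> = 2 / 3 * \<epsilon> * Pa r * sqrt (pp \<beta>) * 4 ^ Suc l / 4 ^ r" by (simp add: field_simps)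
  finally show ?case .
qed

definition \<delta> where "\<delta> = 2 / 3 * \<epsilon>"

lemma \<delta>_bounds: "0 \<le> \<delta>" "\<delta> \<le> 1 / 150" unfolding \<delta>_def using eps0 eps1 by auto

lemma err_rel: assumes l: "l \<le> r" shows "cvnorm (vv l - w l) \<le> \<delta> * cvnorm (w l)"
proof -
  have "cvnorm (vv l - w l) \<le> 2 / 3 * \<epsilon> * Pa r * sqrt (pp \<beta>) * 4 ^ l / 4 ^ r" by (rule err_bound[OF l])
  also have "\<dots> \<le> 2 / 3 * \<epsilon> * (Pa l * 4 ^ (r - l)) * sqrt (pp (bt l)) * 4 ^ l / 4 ^ r"
  proof -
    have "Pa r \<le> Pa l * 4 ^ (r - l)" unfolding Pa_split[OF l] using prod_tail_le[OF l] Pa_pos[OF l]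
      by (intro mult_left_mono) auto
    moreover have "sqrt (pp \<beta>) \<le> sqrt (pp (bt l))" using pp_mono[OF l] by simp
    ultimately show ?thesis using eps0 Pa_pos[of r] Pa_pos[OF l] pp_pos[of \<beta>]
      by (intro divide_right_mono mult_right_mono mult_mono mult_left_mono) auto
  qed
  also have "\<dots> = 2 / 3 * \<epsilon> * (Pa l * sqrt (pp (bt l))) * (4 ^ (r - l) * 4 ^ l / 4 ^ r)"
    by (simp add: field_simps)
  also have "4 ^ (r - l) * 4 ^ l / 4 ^ r = (1::real)"
    using l by (simp add: power_add[symmetric])
  finally show ?thesis unfolding \<delta>_def w_norm[OF l] by simp
qed

lemma vv_norm_bounds: assumes l: "l \<le> r"
  shows "(1 - \<delta>) * cvnorm (w l) \<le> cvnorm (vv l)" "cvnorm (vv l) \<le> (1 + \<delta>) * cvnorm (w l)"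
proof -
  have "cvnorm (w l) \<le> cvnorm (vv l) + cvnorm (w l - vv l)"
    using vv_carrier w_carrier by (intro cvnorm_diff_le) auto
  moreover have "cvnorm (w l - vv l) = cvnorm (vv l - w l)"
    using vv_carrier w_carrier by (intro cvnorm_diff_sym) auto
  ultimately show "(1 - \<delta>) * cvnorm (w l) \<le> cvnorm (vv l)" using err_rel[OF l] by (simp add: algebra_simps)
  have "cvnorm (vv l) \<le> cvnorm (w l) + cvnorm (vv l - w l)"
    using vv_carrier w_carrier by (intro cvnorm_diff_le) auto
  thus "cvnorm (vv l) \<le> (1 + \<delta>) * cvnorm (w l)" using err_rel[OF l] by (simp add: algebra_simps)
qed

lemma vv_norm_pos: "l \<le> r \<Longrightarrow> 0 < cvnorm (vv l)"
proof -
  assume l: "l \<le> r"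
  have "0 < (1 - \<delta>) * cvnorm (w l)" using \<delta>_bounds w_norm_pos[OF l] by simp
  thus ?thesis using vv_norm_bounds(1)[OF l] by linarith
qed

lemma vv_le1: "l \<le> r \<Longrightarrow> cvnorm (vv l) \<le> 1"
proof (induction l)
  case 0 then show ?case using \<Psi>n by simp
next
  case (Suc l)
  have "cvnorm (vv (Suc l)) \<le> cvnorm (vv l)" using M_contr[of "Suc l" "vv l"] Suc.prems vv_carrier by simp
  thus ?case using Suc by simp
qed

end

lemma normalize_norm: "0 < cvnorm x \<Longrightarrow> cvnorm (normalize_vec x) = 1"
  unfolding normalize_vec_def cvnorm_smult by (simp add: norm_divide)

lemma normalize_diff:
  assumes xy: "dim_vec x = dim_vec y" and y: "0 < cvnorm y"
  shows "cvnorm (normalize_vec x - normalize_vec y) \<le> 2 * cvnorm (x - y) / cvnorm y"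
proof -
  define a where "a = 1 / cvnorm x - 1 / cvnorm y"
  have eq: "normalize_vec x - normalize_vec y
      = complex_of_real a \<cdot>\<^sub>v x + complex_of_real (1 / cvnorm y) \<cdot>\<^sub>v (x - y)"
    unfolding normalize_vec_def a_def using xy by (intro eq_vecI) (auto simp: algebra_simps)
  have "cvnorm (normalize_vec x - normalize_vec y)
      \<le> cvnorm (complex_of_real a \<cdot>\<^sub>v x) + cvnorm (complex_of_real (1 / cvnorm y) \<cdot>\<^sub>v (x - y))"
    unfolding eq using xy by (intro cvnorm_add_le) auto
  also have "\<dots> = \<bar>a\<bar> * cvnorm x + cvnorm (x - y) / cvnorm y"
    unfolding cvnorm_smult using y by (simp add: norm_divide)
  also have "\<bar>a\<bar> * cvnorm x \<le> cvnorm (x - y) / cvnorm y"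
  proof (cases "cvnorm x = 0")
    case True
    then show ?thesis using y by simp
  next
    case False
    hence xp: "0 < cvnorm x" using cvnorm_nonneg[of x] by linarith
    have a2: "a = (cvnorm y - cvnorm x) / (cvnorm x * cvnorm y)"
      unfolding a_def using xp y by (simp add: diff_frac_eq)
    have "\<bar>a\<bar> = \<bar>cvnorm y - cvnorm x\<bar> / (cvnorm x * cvnorm y)"
      unfolding a2 abs_divide using xp y by simp
    hence "\<bar>a\<bar> * cvnorm x = \<bar>cvnorm y - cvnorm x\<bar> / cvnorm y"
      using xp by simp
    also have "\<bar>cvnorm y - cvnorm x\<bar> \<le> cvnorm (x - y)"
    proof -
      have "cvnorm x \<le> cvnorm y + cvnorm (x - y)" using xy by (rule cvnorm_diff_le)
      moreover have "cvnorm y \<le> cvnorm x + cvnorm (y - x)" using xy by (intro cvnorm_diff_le) simp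
      moreover have "cvnorm (y - x) = cvnorm (x - y)" using xy by (intro cvnorm_diff_sym) simp
      ultimately show ?thesis by linarith
    qed
    hence "\<bar>cvnorm y - cvnorm x\<bar> / cvnorm y \<le> cvnorm (x - y) / cvnorm y"
      using y by (intro divide_right_mono) auto
    finally show ?thesis .
  qed
  finally show ?thesis by simp
qed

lemma ratio_core:
  fixes s t \<delta> :: real
  assumes s: "\<bar>s - 1\<bar> \<le> \<delta>" and t: "\<bar>t - 1\<bar> \<le> \<delta>" and d0: "0 \<le> \<delta>" and d1: "\<delta> \<le> 1/150"
  shows "\<bar>s\<^sup>2 - t\<^sup>2\<bar> \<le> 5 * \<delta> * t\<^sup>2"
proof -
  have s0: "0 \<le> s" and t0: "1 - \<delta> \<le> t" using s t d1 by auto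
  have st: "\<bar>s - t\<bar> \<le> 2 * \<delta>" using s t by linarith
  have sum: "0 \<le> s + t" "s + t \<le> 2 + 2 * \<delta>" using s t d1 by auto
  have "s\<^sup>2 - t\<^sup>2 = (s - t) * (s + t)" by (simp add: power2_eq_square algebra_simps)
  hence "\<bar>s\<^sup>2 - t\<^sup>2\<bar> = \<bar>s - t\<bar> * \<bar>s + t\<bar>" by (simp add: abs_mult)
  hence "\<bar>s\<^sup>2 - t\<^sup>2\<bar> = \<bar>s - t\<bar> * (s + t)" using sum by simp
  also have "\<dots> \<le> (2 * \<delta>) * (2 + 2 * \<delta>)" using st sum d0 by (intro mult_mono) auto
  also have "\<dots> \<le> 5 * \<delta> * (1 - 2 * \<delta>)"
  proof -
    have h: "\<delta> * \<delta> \<le> \<delta> * (1/150)" using d0 d1 by (intro mult_left_mono) auto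
    have h0: "0 \<le> \<delta> * \<delta>" using d0 by simp
    have eq: "5 * \<delta> * (1 - 2 * \<delta>) - (2 * \<delta>) * (2 + 2 * \<delta>) = \<delta> - 14 * (\<delta> * \<delta>)"
      by (simp add: algebra_simps)
    show ?thesis using h h0 eq by linarith
  qed
  also have "\<dots> \<le> 5 * \<delta> * t\<^sup>2"
  proof -
    have "(1 - \<delta>)\<^sup>2 \<le> t\<^sup>2" using t0 d1 by (intro power_mono) auto
    moreover have "1 - 2 * \<delta> \<le> (1 - \<delta>)\<^sup>2" by (simp add: power2_eq_square algebra_simps)
    ultimately show ?thesis using d0 by (intro mult_left_mono) auto
  qed
  finally show ?thesis .
qed

lemma rel_unit:
  fixes u U \<delta> :: real
  assumes U: "0 < U" and u: "\<bar>u - U\<bar> \<le> \<delta> * U"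
  shows "\<bar>u / U - 1\<bar> \<le> \<delta>"
proof -
  have "u / U - 1 = (u - U) / U" using U by (simp add: diff_divide_distrib)
  hence "\<bar>u / U - 1\<bar> = \<bar>u - U\<bar> / U" using U by (simp add: abs_divide)
  also have "\<dots> \<le> \<delta> * U / U" using u U by (intro divide_right_mono) auto
  also have "\<dots> = \<delta>" using U by simp
  finally show ?thesis .
qed

lemma ratio_bound:
  fixes u U z Z \<delta> :: real
  assumes U: "0 < U" and Z: "0 < Z" and u: "\<bar>u - U\<bar> \<le> \<delta> * U" and z: "\<bar>z - Z\<bar> \<le> \<delta> * Z"
    and d0: "0 \<le> \<delta>" and d1: "\<delta> \<le> 1/150"
  shows "\<bar>u\<^sup>2 / z\<^sup>2 - U\<^sup>2 / Z\<^sup>2\<bar> \<le> 5 * \<delta> * (U\<^sup>2 / Z\<^sup>2)"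
proof -
  define s where "s = u / U"
  define t where "t = z / Z"
  define K where "K = U\<^sup>2 / Z\<^sup>2"
  have K: "0 \<le> K" unfolding K_def by simp
  have Kd: "U\<^sup>2 / Z\<^sup>2 = K" unfolding K_def ..
  have s: "\<bar>s - 1\<bar> \<le> \<delta>" unfolding s_def by (rule rel_unit[OF U u])
  have t: "\<bar>t - 1\<bar> \<le> \<delta>" unfolding t_def by (rule rel_unit[OF Z z])
  have tpos: "0 < t" using t d1 by auto
  have core: "\<bar>s\<^sup>2 - t\<^sup>2\<bar> \<le> 5 * \<delta> * t\<^sup>2" by (rule ratio_core[OF s t d0 d1])
  have uu: "u = s * U" and zz: "z = t * Z" unfolding s_def t_def using U Z by auto
  have "u\<^sup>2 / z\<^sup>2 = s\<^sup>2 / t\<^sup>2 * K" unfolding uu zz K_def by (simp add: power_mult_distrib)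
  hence "u\<^sup>2 / z\<^sup>2 - K = (s\<^sup>2 / t\<^sup>2 - 1) * K" by (simp add: algebra_simps)
  also have "s\<^sup>2 / t\<^sup>2 - 1 = (s\<^sup>2 - t\<^sup>2) / t\<^sup>2" using tpos by (simp add: diff_divide_distrib)
  finally have eq: "u\<^sup>2 / z\<^sup>2 - K = (s\<^sup>2 - t\<^sup>2) / t\<^sup>2 * K" .
  have "\<bar>(s\<^sup>2 - t\<^sup>2) / t\<^sup>2\<bar> = \<bar>s\<^sup>2 - t\<^sup>2\<bar> / t\<^sup>2" by (simp add: abs_divide)
  also have "\<dots> \<le> 5 * \<delta> * t\<^sup>2 / t\<^sup>2" using core by (intro divide_right_mono) auto
  also have "\<dots> = 5 * \<delta>" using tpos by simp
  finally have "\<bar>(s\<^sup>2 - t\<^sup>2) / t\<^sup>2\<bar> \<le> 5 * \<delta>" .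
  hence "\<bar>(s\<^sup>2 - t\<^sup>2) / t\<^sup>2\<bar> * K \<le> 5 * \<delta> * K" using K by (rule mult_right_mono)
  hence "\<bar>(s\<^sup>2 - t\<^sup>2) / t\<^sup>2 * K\<bar> \<le> 5 * \<delta> * K" by (simp only: abs_mult abs_of_nonneg[OF K])
  thus ?thesis unfolding Kd eq[symmetric] .
qed

lemma normalize_dim[simp]: "dim_vec (normalize_vec x) = dim_vec x"
  unfolding normalize_vec_def by simp

context frag
begin

lemma fs: "l \<le> r \<Longrightarrow> frag_state M \<Psi> l = normalize_vec (vv l)"
proof (induction l)
  case 0
  show ?case unfolding normalize_vec_def using \<Psi>n \<Psi>c by simp
next
  case (Suc l)
  have c: "0 < 1 / cvnorm (vv l)" using vv_norm_pos[of l] Suc.prems by simp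
  have "frag_state M \<Psi> (Suc l) = normalize_vec (M (Suc l) *\<^sub>v normalize_vec (vv l))"
    using Suc by simp
  also have "M (Suc l) *\<^sub>v normalize_vec (vv l) = complex_of_real (1 / cvnorm (vv l)) \<cdot>\<^sub>v vv (Suc l)"
    unfolding normalize_vec_def vv.simps by (rule mult_mat_vec[OF M_carrier vv_carrier])
  also have "normalize_vec \<dots> = normalize_vec (vv (Suc l))" by (rule normalize_smult[OF c])
  finally show ?case .
qed

lemma succ: assumes l: "l \<in> {1..r}"
  shows "frag_succ_prob M \<Psi> l = (cvnorm (vv l))\<^sup>2 / (cvnorm (vv (l - 1)))\<^sup>2"
proof -
  obtain k where k: "l = Suc k" using l by (cases l) auto
  have kr: "k \<le> r" using l k by auto
  have "M l *\<^sub>v frag_state M \<Psi> (l - 1) = complex_of_real (1 / cvnorm (vv k)) \<cdot>\<^sub>v vv l"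
    unfolding k using fs[OF kr] unfolding normalize_vec_def
    by (simp add: mult_mat_vec[OF M_carrier vv_carrier])
  thus ?thesis unfolding frag_succ_prob_def cvnorm_smult using k vv_norm_pos[OF kr]
    by (simp add: cvnorm_smult power_divide norm_divide)
qed

lemma prod_succ: "l \<le> r \<Longrightarrow> (\<Prod>k\<in>{1..l}. frag_succ_prob M \<Psi> k) = (cvnorm (vv l))\<^sup>2"
proof (induction l)
  case 0 then show ?case using \<Psi>n by simp
next
  case (Suc l)
  have "(\<Prod>k\<in>{1..Suc l}. frag_succ_prob M \<Psi> k) = frag_succ_prob M \<Psi> (Suc l) * (\<Prod>k\<in>{1..l}. frag_succ_prob M \<Psi> k)"
    by (rule prod.nat_ivl_Suc') simp
  also have "\<dots> = (cvnorm (vv (Suc l)))\<^sup>2 / (cvnorm (vv l))\<^sup>2 * (cvnorm (vv l))\<^sup>2"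
    using succ[of "Suc l"] Suc by simp
  also have "\<dots> = (cvnorm (vv (Suc l)))\<^sup>2" using vv_norm_pos[of l] Suc.prems by simp
  finally show ?case .
qed

lemma reach: "l \<in> {1..r} \<Longrightarrow> frag_reach_prob M \<Psi> l = (cvnorm (vv (l - 1)))\<^sup>2"
proof -
  assume l: "l \<in> {1..r}"
  have "{1..<l} = {1..l - 1}" using l by auto
  hence "frag_reach_prob M \<Psi> l = (\<Prod>k\<in>{1..l - 1}. frag_succ_prob M \<Psi> k)"
    unfolding frag_reach_prob_def by simp
  also have "\<dots> = (cvnorm (vv (l - 1)))\<^sup>2" by (rule prod_succ) (use l in auto)
  finally show ?thesis .
qed

lemma attempt: "frag_attempt_succ M \<Psi> r = (cvnorm (vv r))\<^sup>2"
  unfolding frag_attempt_succ_def using prod_succ[of r] by simp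

lemma a_bounds: "0 < frag_attempt_succ M \<Psi> r" "frag_attempt_succ M \<Psi> r \<le> 1"
  unfolding attempt using vv_norm_pos[of r] vv_le1[of r] by (auto simp: power_le_one)

lemma halt: "frag_halt_prob M \<Psi> r = 1"
proof -
  have "frag_halt_prob M \<Psi> r = frag_attempt_succ M \<Psi> r / frag_attempt_succ M \<Psi> r"
    unfolding frag_halt_prob_def by (rule geom_sum[OF a_bounds])
  thus ?thesis using a_bounds by simp
qed

lemma runs: assumes l: "l \<in> {1..r}"
  shows "frag_expected_runs M \<Psi> r l = (cvnorm (vv (l - 1)))\<^sup>2 / (cvnorm (vv r))\<^sup>2"
proof -
  have "frag_expected_runs M \<Psi> r l = frag_reach_prob M \<Psi> l / frag_attempt_succ M \<Psi> r"
    unfolding frag_expected_runs_def by (rule geom_sum[OF a_bounds])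
  thus ?thesis unfolding reach[OF l] attempt .
qed

definition nn where "nn l = pp (\<Sum>k=1..l-1. \<Delta>\<beta> k) / (pp \<beta> * (\<Prod>k=l..r. (\<alpha> k)\<^sup>2))"

lemma nn_eq: assumes l: "l \<in> {1..r}" shows "nn l = (cvnorm (w (l - 1)))\<^sup>2 / (cvnorm (w r))\<^sup>2"
proof -
  have l1: "l - 1 \<le> r" using l by auto
  have Sl: "Suc (l - 1) = l" using l by auto
  have split: "Pa r = Pa (l - 1) * (\<Prod>k=l..r. \<alpha> k)" using Pa_split[OF l1] Sl by simp
  have P: "0 < Pa (l - 1)" using Pa_pos[OF l1] .
  have pb: "0 < pp \<beta>" "0 < pp (bt (l - 1))" using pp_pos by auto
  have "(cvnorm (w (l - 1)))\<^sup>2 / (cvnorm (w r))\<^sup>2 = (Pa (l - 1))\<^sup>2 * pp (bt (l - 1)) / ((Pa r)\<^sup>2 * pp \<beta>)"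
    unfolding w_norm[OF l1] w_norm[OF order.refl] bt_r using pb by (simp add: power_mult_distrib)
  also have "\<dots> = pp (bt (l - 1)) / (pp \<beta> * (\<Prod>k=l..r. \<alpha> k)\<^sup>2)"
    unfolding split using P pb by (simp add: power_mult_distrib field_simps)
  also have "\<dots> = nn l" unfolding nn_def bt_def by (simp add: prod_power_distrib)
  finally show ?thesis by simp
qed

lemma runs_bound: assumes l: "l \<in> {1..r}"
  shows "\<bar>frag_expected_runs M \<Psi> r l - nn l\<bar> \<le> 10 * \<epsilon> * nn l"
proof -
  have l1: "l - 1 \<le> r" using l by auto
  have e1: "\<bar>cvnorm (vv (l - 1)) - cvnorm (w (l - 1))\<bar> \<le> \<delta> * cvnorm (w (l - 1))"
    using vv_norm_bounds[OF l1] by (simp add: abs_le_iff algebra_simps)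
  have e2: "\<bar>cvnorm (vv r) - cvnorm (w r)\<bar> \<le> \<delta> * cvnorm (w r)"
    using vv_norm_bounds[of r] by (simp add: abs_le_iff algebra_simps)
  have "\<bar>frag_expected_runs M \<Psi> r l - nn l\<bar> \<le> 5 * \<delta> * nn l"
    unfolding runs[OF l] nn_eq[OF l]
    by (rule ratio_bound[OF w_norm_pos[OF l1] w_norm_pos[OF order.refl] e1 e2 \<delta>_bounds])
  also have "\<dots> \<le> 10 * \<epsilon> * nn l"
  proof -
    have "0 \<le> nn l" unfolding nn_eq[OF l] by simp
    thus ?thesis unfolding \<delta>_def using eps0 by (intro mult_right_mono) auto
  qed
  finally show ?thesis .
qed

lemma trace_bound: "trace_dist_pure (frag_state M \<Psi> r) (normalize_vec (F_op \<beta> H *\<^sub>v \<Psi>)) \<le> 10 * \<epsilon>"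
proof -
  have wr: "normalize_vec (F_op \<beta> H *\<^sub>v \<Psi>) = normalize_vec (w r)"
    unfolding w_def bt_r using normalize_smult[OF Pa_pos[OF order.refl]] by simp
  have "trace_dist_pure (normalize_vec (vv r)) (normalize_vec (w r)) \<le> cvnorm (normalize_vec (vv r) - normalize_vec (w r))"
    by (rule trace_dist_le) (auto simp: normalize_dim intro!: normalize_norm vv_norm_pos w_norm_pos)
  also have "\<dots> \<le> 2 * cvnorm (vv r - w r) / cvnorm (w r)"
    by (rule normalize_diff) (auto simp: w_norm_pos)
  also have "\<dots> \<le> 2 * (\<delta> * cvnorm (w r)) / cvnorm (w r)"
    using err_rel[of r] w_norm_pos[of r] by (intro divide_right_mono) auto
  also have "\<dots> = 2 * \<delta>" using w_norm_pos[of r] by simp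
  also have "\<dots> \<le> 10 * \<epsilon>" unfolding \<delta>_def using eps0 by simp
  finally show ?thesis unfolding fs[OF order.refl] wr .
qed

lemma q_bound:
  fixes q :: "nat \<Rightarrow> nat"
  shows "\<bar>(\<Sum>l=1..r. frag_expected_runs M \<Psi> r l * real (q l)) - (\<Sum>l=1..r. nn l * real (q l))\<bar>
     \<le> 10 * \<epsilon> * (\<Sum>l=1..r. nn l * real (q l))"
proof -
  have "\<bar>(\<Sum>l=1..r. frag_expected_runs M \<Psi> r l * real (q l)) - (\<Sum>l=1..r. nn l * real (q l))\<bar>
      = \<bar>\<Sum>l=1..r. (frag_expected_runs M \<Psi> r l - nn l) * real (q l)\<bar>"
    by (simp add: sum_subtractf left_diff_distrib)
  also have "\<dots> \<le> (\<Sum>l=1..r. \<bar>(frag_expected_runs M \<Psi> r l - nn l) * real (q l)\<bar>)" by (rule sum_abs)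
  also have "\<dots> \<le> (\<Sum>l=1..r. 10 * \<epsilon> * nn l * real (q l))"
    using runs_bound by (intro sum_mono) (auto simp: abs_mult intro: mult_right_mono)
  also have "\<dots> = 10 * \<epsilon> * (\<Sum>l=1..r. nn l * real (q l))" by (simp add: sum_distrib_left mult.assoc)
  finally show ?thesis .
qed

end

lemma main_frag:
  fixes d :: nat and H :: "complex mat" and \<Psi> :: "complex vec" and \<beta> \<epsilon> :: real and r :: nat
    and \<Delta>\<beta> \<alpha> \<epsilon>' :: "nat \<Rightarrow> real" and m :: "nat \<Rightarrow> nat" and U :: "nat \<Rightarrow> complex mat" and q :: "nat \<Rightarrow> nat"
  assumes "0 < d" "hermitian_mat d H" "\<Psi> \<in> carrier_vec d" "cvnorm \<Psi> = 1" "0 \<le> \<epsilon>" "\<epsilon> \<le> 1/100"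
    "\<forall>l\<in>{1..r}. 0 < \<Delta>\<beta> l" "(\<Sum>l=1..r. \<Delta>\<beta> l) = \<beta>"
    "\<forall>l\<in>{1..r}. 0 < \<alpha> l \<and> qite_primitive d H (\<Delta>\<beta> l) (\<epsilon>' l) (\<alpha> l) (m l) (U l)"
    "1 \<le> r \<longrightarrow> \<epsilon>' 1 \<le> \<epsilon> * (\<Prod>k=1..r. \<alpha> k) / (2 * 4 ^ (r - 1)) * sqrt (p_psi H \<Psi> \<beta>)"
    "\<forall>l\<in>{2..r}. \<epsilon>' l \<le> \<epsilon> * (\<Prod>k=l..r. \<alpha> k) / 4 ^ (r - l + 1) *
          sqrt (p_psi H \<Psi> \<beta> / p_psi H \<Psi> (\<Sum>k=1..l-1. \<Delta>\<beta> k))"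
  shows "(let M = (\<lambda>l. anc0_block d (m l) (U l));
          n = (\<lambda>l. p_psi H \<Psi> (\<Sum>k=1..l-1. \<Delta>\<beta> k) /
                     (p_psi H \<Psi> \<beta> * (\<Prod>k=l..r. (\<alpha> k)\<^sup>2)));
          target = normalize_vec (F_op \<beta> H *\<^sub>v \<Psi>)
      in frag_halt_prob M \<Psi> r = 1 \<and>
         trace_dist_pure (frag_state M \<Psi> r) target \<le> 10 * \<epsilon> \<and>
         (\<forall>l\<in>{1..r}. \<bar>frag_expected_runs M \<Psi> r l - n l\<bar> \<le> 10 * \<epsilon> * n l) \<and>
         \<bar>(\<Sum>l=1..r. frag_expected_runs M \<Psi> r l * real (q l)) -
           (\<Sum>l=1..r. n l * real (q l))\<bar>
           \<le> 10 * \<epsilon> * (\<Sum>l=1..r. n l * real (q l)))"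
proof -
  interpret frag d H \<Psi> \<beta> \<epsilon> r \<Delta>\<beta> \<alpha> \<epsilon>' m U using assms by unfold_locales
  show ?thesis unfolding Let_def M_def[symmetric] nn_def[symmetric]
    using halt trace_bound runs_bound q_bound[of q] by simp
qed

theorem theorem4:
  "\<exists>C::real. C > 0 \<and> (\<exists>\<epsilon>0::real. \<epsilon>0 > 0 \<and>
   (\<forall>(d::nat) (H::complex mat) (\<Psi>::complex vec) (\<beta>::real) (\<epsilon>::real) (r::nat)
      (\<Delta>\<beta>::nat \<Rightarrow> real) (\<alpha>::nat \<Rightarrow> real) (\<epsilon>'::nat \<Rightarrow> real) (m::nat \<Rightarrow> nat)
      (U::nat \<Rightarrow> complex mat) (q::nat \<Rightarrow> nat).
     0 < d \<and> hermitian_mat d H \<and> op_norm H \<le> 1 \<and>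
     \<Psi> \<in> carrier_vec d \<and> cvnorm \<Psi> = 1 \<and>
     0 \<le> \<beta> \<and> 0 \<le> \<epsilon> \<and> \<epsilon> \<le> \<epsilon>0 \<and>
     (\<forall>l\<in>{1..r}. 0 < \<Delta>\<beta> l) \<and> (\<Sum>l=1..r. \<Delta>\<beta> l) = \<beta> \<and>
     (\<forall>l\<in>{1..r}. 0 < \<alpha> l \<and> qite_primitive d H (\<Delta>\<beta> l) (\<epsilon>' l) (\<alpha> l) (m l) (U l)) \<and>
     (1 \<le> r \<longrightarrow> \<epsilon>' 1 \<le> \<epsilon> * (\<Prod>k=1..r. \<alpha> k) / (2 * 4 ^ (r - 1)) * sqrt (p_psi H \<Psi> \<beta>)) \<and>
     (\<forall>l\<in>{2..r}. \<epsilon>' l \<le> \<epsilon> * (\<Prod>k=l..r. \<alpha> k) / 4 ^ (r - l + 1) *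
          sqrt (p_psi H \<Psi> \<beta> / p_psi H \<Psi> (\<Sum>k=1..l-1. \<Delta>\<beta> k)))
     \<longrightarrow>
     (let M = (\<lambda>l. anc0_block d (m l) (U l));
          n = (\<lambda>l. p_psi H \<Psi> (\<Sum>k=1..l-1. \<Delta>\<beta> k) /
                     (p_psi H \<Psi> \<beta> * (\<Prod>k=l..r. (\<alpha> k)\<^sup>2)));
          target = normalize_vec (F_op \<beta> H *\<^sub>v \<Psi>)
      in frag_halt_prob M \<Psi> r = 1 \<and>
         trace_dist_pure (frag_state M \<Psi> r) target \<le> C * \<epsilon> \<and>
         (\<forall>l\<in>{1..r}. \<bar>frag_expected_runs M \<Psi> r l - n l\<bar> \<le> C * \<epsilon> * n l) \<and>
         \<bar>(\<Sum>l=1..r. frag_expected_runs M \<Psi> r l * real (q l)) -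
           (\<Sum>l=1..r. n l * real (q l))\<bar>
           \<le> C * \<epsilon> * (\<Sum>l=1..r. n l * real (q l)))))"
  apply (rule exI[of _ "10::real"])
  apply (rule conjI, simp)
  apply (rule exI[of _ "1/100::real"])
  apply (rule conjI, simp)
  apply (intro allI impI)
  apply (elim conjE)
  apply (rule main_frag)
             apply assumption+
  done

end
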